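(* Suppose Assumptions 1 and 2 hold, $Q\succeq0$ satisfies $\mathrm{null}(\Pi_{2u}\Pi_{2u}^\top)\cap\mathrm{null}(Q)=\{0\}$, and $\mu\ge\max\{\hat L_f,L_h\}$. Then for every $\gamma>0$ there exist $\epsilon>0$, $\rho>0$, $\varphi_1,\varphi_2\ge0$ and a matrix $\mathbf P\succ0$ such that $\mathbf A^\gamma_{\epsilon\rho}$ satisfies $\mathrm{LMI}(\mathbf P,\Xi_\varphi)$.
   Context: Let $A\in\mathbb R^{n\times n}$ be Hurwitz, $B\in\mathbb R^{n\times p}$, $B_w\in\mathbb R^{n\times q}$, and for $i=1,2$ let $C_i\in\mathbb R^{r_i\times n}$, $D_{iw}\in\mathbb R^{r_i\times q}$. Define $\Pi_{iu}:=-C_iA^{-1}B$ and $\Pi_{iw}:=-C_iA^{-1}B_w+D_{iw}$. For $t\ge0$ let $f^t:\mathbb R^p\to\mathbb R$, $h^t:\mathbb R^{r_1}\to\mathbb R$ and $g^t:\mathbb R^{r_2}\to\mathbb R\cup\{+\infty\}$ be given, let $w:[0,\infty)\to\mathbb R^q$, and fix $\mu>0$ and $Q\in\mathbb R^{r_2\times r_2}$. Definitions. - $M_{\mu g}(v):=\min_x g(x)+\frac1{2\mu}\|x-v\|^2$ is the Moreau envelope. - $\mathcal P(t)$: minimize $f^t(u)+h^t(y_1)+g^t(y_2)$ subject to $y_i=\Pi_{iu}u+\Pi_{iw}w(t)$. - Its optimal primal-dual pairs are saddle points of $f^t(u)+h^t(\Pi_{1u}u+\Pi_{1w}w(t))+M_{\mu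 g^t}(\Pi_{2u}u+\Pi_{2w}w(t)+\mu\lambda)-\frac\mu2\|\lambda\|^2$. Assumptions. - Assumption 1: for all $t$, $f^t$ is $m$-strongly convex with $L_f$-Lipschitz gradient, $h^t$ is convex with $L_h$-Lipschitz gradient, and $g^t$ is proper, convex and lsc. - Assumption 2: $\mathcal P(t)$ is feasible for all $t\ge0$ and $t\mapsto(u^\star(t),\lambda^\star(t))$ is measurable. Regularized algorithm. For $\gamma>0$ the regularized closed loop is $$\dot x=Ax+Bu+B_ww,\quad \dot u=-\nabla f^t(u)-\Pi_{1u}^\top\nabla h^t(y_1)-\Pi_{2u}^\top\nabla M_{\mu g^t}(y_2+\mu\lambda),\quad \dot\lambda=\mu(\nabla M_{\mu g^t}(y_2+\mu\lambda)-\lambda)-\gamma Q\lambda.$$ Matrices. Let $\hat L_f:=L_f-m$. For $\epsilon>0$ and $\rho\ge0$ define $$\mathbf A^\gamma_\epsilon:=\begin{bmatrix}\frac1\epsilon A&\frac1\epsilon B&0\\0&-mI&0\\0&0&-\mu I-\gamma Q\end{bmatrix},\qquad \mathbf A^\gamma_{\epsilon\rho}:=\mathbf A^\gamma_\epsilon+\rho I,$$ $$\mathbf B=\begin{bmatrix}0&0&0\\-I&-\Pi_{1u}^\top&-\frac1\mu\Pi_{2u}^\top\\0&0&I\end{bmatrix},\qquad \mathbf C=\begin{bmatrix}0&I&0\\C_1&0&0\\C_2&0&\mu I\end{bmatrix}.$$ LMI condition. For $\varphi_1,\varphi_2\ge0$, $\Xi_\varphi$ is the $6\times6$ block matrix,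 with block sizes $(p,r_1,r_2,p,r_1,r_2)$, whose nonzero blocks are: - $(1,4)=(4,1)=\varphi_1\hat L_fI$ and $(4,4)=-2\varphi_1I$; - $(2,5)=(5,2)=\varphi_2L_hI$ and $(5,5)=-2\varphi_2I$; - $(3,6)=(6,3)=I$ and $(6,6)=-2I$. A matrix $\mathbf A'$ satisfies $\mathrm{LMI}(\mathbf P,\Xi_\varphi)$ if $\begin{bmatrix}\mathbf A'^\top\mathbf P+\mathbf P\mathbf A'&\mathbf P\mathbf B\\\mathbf B^\top\mathbf P&0\end{bmatrix}+\begin{bmatrix}\mathbf C^\top&0\\0&I\end{bmatrix}\Xi_\varphi\begin{bmatrix}\mathbf C&0\\0&I\end{bmatrix}\preceq0$. *)

theory Defs
  imports "HOL-Analysis.Analysis"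
begin

section \<open>Matrix notions\<close>

definition psd :: "real^'n^'n \<Rightarrow> bool" where
  "psd M \<longleftrightarrow> transpose M = M \<and> (\<forall>x. 0 \<le> x \<bullet> (M *v x))"

definition pd :: "real^'n^'n \<Rightarrow> bool" where
  "pd M \<longleftrightarrow> transpose M = M \<and> (\<forall>x. x \<noteq> 0 \<longrightarrow> 0 < x \<bullet> (M *v x))"

text \<open>M is negative semidefinite (M \<preceq> 0).\<close>
definition nsd :: "real^'n^'n \<Rightarrow> bool" where
  "nsd M \<longleftrightarrow> psd (- M)"

text \<open>Hurwitz: every (complex) eigenvalue has negative real part.\<close>
definition hurwitz :: "real^'n^'n \<Rightarrow> bool" where
  "hurwitz A \<longleftrightarrow> (\<forall>(l::complex) (v::complex^'n).
      v \<noteq> 0 \<and> (\<chi> i j. complex_of_real (A $ i $ j)) *v v = l *s v \<longrightarrow> Re l < 0)"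

section \<open>Block matrices\<close>

definition block2 ::
  "real^'b1^'a1 \<Rightarrow> real^'b2^'a1 \<Rightarrow> real^'b1^'a2 \<Rightarrow> real^'b2^'a2 \<Rightarrow> real^('b1 + 'b2)^('a1 + 'a2)" where
  "block2 M11 M12 M21 M22 = (\<chi> i j.
     (case i of
        Inl i1 \<Rightarrow> (case j of Inl j1 \<Rightarrow> M11 $ i1 $ j1 | Inr j2 \<Rightarrow> M12 $ i1 $ j2)
      | Inr i2 \<Rightarrow> (case j of Inl j1 \<Rightarrow> M21 $ i2 $ j1 | Inr j2 \<Rightarrow> M22 $ i2 $ j2)))"

definition block3 ::
  "real^'b1^'a1 \<Rightarrow> real^'b2^'a1 \<Rightarrow> real^'b3^'a1 \<Rightarrow>
   real^'b1^'a2 \<Rightarrow> real^'b2^'a2 \<Rightarrow> real^'b3^'a2 \<Rightarrow>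
   real^'b1^'a3 \<Rightarrow> real^'b2^'a3 \<Rightarrow> real^'b3^'a3 \<Rightarrow>
   real^('b1 + 'b2 + 'b3)^('a1 + 'a2 + 'a3)" where
  "block3 M11 M12 M13 M21 M22 M23 M31 M32 M33 = (\<chi> i j.
     (case i of
        Inl i1 \<Rightarrow> (case j of Inl j1 \<Rightarrow> M11 $ i1 $ j1 | Inr (Inl j2) \<Rightarrow> M12 $ i1 $ j2 | Inr (Inr j3) \<Rightarrow> M13 $ i1 $ j3)
      | Inr (Inl i2) \<Rightarrow> (case j of Inl j1 \<Rightarrow> M21 $ i2 $ j1 | Inr (Inl j2) \<Rightarrow> M22 $ i2 $ j2 | Inr (Inr j3) \<Rightarrow> M23 $ i2 $ j3)
      | Inr (Inr i3) \<Rightarrow> (case j of Inl j1 \<Rightarrow> M31 $ i3 $ j1 | Inr (Inl j2) \<Rightarrow> M32 $ i3 $ j2 | Inr (Inr j3) \<Rightarrow> M33 $ i3 $ j3)))"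

section \<open>Matrices of the regularized closed loop\<close>

definition Pi_u :: "real^'n^'r \<Rightarrow> real^'n^'n \<Rightarrow> real^'p^'n \<Rightarrow> real^'p^'r" where
  "Pi_u C A B = - (C ** matrix_inv A ** B)"

definition Pi_w :: "real^'n^'r \<Rightarrow> real^'n^'n \<Rightarrow> real^'q^'n \<Rightarrow> real^'q^'r \<Rightarrow> real^'q^'r" where
  "Pi_w C A Bw D = - (C ** matrix_inv A ** Bw) + D"

text \<open>\<open>A^\<gamma>_\<epsilon>\<close>, state ordered as (x, u, lambda).\<close>
definition AA :: "real^'n^'n \<Rightarrow> real^'p^'n \<Rightarrow> real \<Rightarrow> real \<Rightarrow> real^'r2^'r2 \<Rightarrow> real \<Rightarrow> real \<Rightarrow>
    real^('n + 'p + 'r2)^('n + 'p + 'r2)" where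
  "AA A B m \<mu> Q \<gamma> \<epsilon> = block3
     ((1/\<epsilon>) *\<^sub>R A) ((1/\<epsilon>) *\<^sub>R B) 0
     0 (- (m *\<^sub>R mat 1)) 0
     0 0 (- (\<mu> *\<^sub>R mat 1) - \<gamma> *\<^sub>R Q)"

text \<open>\<open>A^\<gamma>_{\<epsilon>\<rho>} = A^\<gamma>_\<epsilon> + \<rho> I\<close>.\<close>
definition AA_rho :: "real^'n^'n \<Rightarrow> real^'p^'n \<Rightarrow> real \<Rightarrow> real \<Rightarrow> real^'r2^'r2 \<Rightarrow> real \<Rightarrow> real \<Rightarrow> real \<Rightarrow>
    real^('n + 'p + 'r2)^('n + 'p + 'r2)" where
  "AA_rho A B m \<mu> Q \<gamma> \<epsilon> \<rho> = AA A B m \<mu> Q \<gamma> \<epsilon> + \<rho> *\<^sub>R mat 1"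

definition BB :: "real^'p^'r1 \<Rightarrow> real^'p^'r2 \<Rightarrow> real \<Rightarrow> real^('p + 'r1 + 'r2)^('n::finite + 'p + 'r2)" where
  "BB Pi1u Pi2u \<mu> = block3
     0 0 0
     (- mat 1) (- transpose Pi1u) (- ((1/\<mu>) *\<^sub>R transpose Pi2u))
     0 0 (mat 1)"

definition CC :: "real^'n^'r1 \<Rightarrow> real^'n^'r2 \<Rightarrow> real \<Rightarrow> real^('n + 'p::finite + 'r2)^('p + 'r1 + 'r2)" where
  "CC C1 C2 \<mu> = block3
     0 (mat 1) 0
     C1 0 0
     C2 0 (\<mu> *\<^sub>R mat 1)"

text \<open>\<open>\<Xi>_\<phi>\<close> with block sizes (p, r1, r2, p, r1, r2); \<open>Lfh\<close> stands for \<open>L_f - m\<close>.\<close>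
definition Xi :: "real \<Rightarrow> real \<Rightarrow> real \<Rightarrow> real \<Rightarrow>
    real^(('p::finite + 'r1::finite + 'r2::finite) + ('p + 'r1 + 'r2))^(('p + 'r1 + 'r2) + ('p + 'r1 + 'r2))" where
  "Xi Lfh Lh \<phi>1 \<phi>2 = block2
     0
     (block3 ((\<phi>1 * Lfh) *\<^sub>R mat 1) 0 0  0 ((\<phi>2 * Lh) *\<^sub>R mat 1) 0  0 0 (mat 1))
     (block3 ((\<phi>1 * Lfh) *\<^sub>R mat 1) 0 0  0 ((\<phi>2 * Lh) *\<^sub>R mat 1) 0  0 0 (mat 1))
     (block3 ((-2 * \<phi>1) *\<^sub>R mat 1) 0 0  0 ((-2 * \<phi>2) *\<^sub>R mat 1) 0  0 0 ((-2) *\<^sub>R mat 1))"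

text \<open>\<open>A'\<close> satisfies \<open>LMI(P, \<Xi>)\<close> (with the fixed matrices \<open>B\<close>, \<open>C\<close>).\<close>
definition LMI :: "real^'s::finite^'s \<Rightarrow> real^'i^'s \<Rightarrow> real^'s^'o \<Rightarrow> real^'s^'s \<Rightarrow> real^('o + 'i)^('o + 'i) \<Rightarrow> bool" where
  "LMI A' Bm Cm P X \<longleftrightarrow> nsd
     (block2 (transpose A' ** P + P ** A') (P ** Bm) (transpose Bm ** P) 0
      + block2 (transpose Cm) 0 0 (mat 1) ** X ** block2 Cm 0 0 (mat 1))"

section \<open>Function classes (Assumption 1)\<close>

definition strongly_convex :: "real \<Rightarrow> ('a::real_inner \<Rightarrow> real) \<Rightarrow> bool" where
  "strongly_convex m f \<longleftrightarrow> (\<forall>x y a. 0 \<le> a \<and> a \<le> 1 \<longrightarrow>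
     f (a *\<^sub>R x + (1 - a) *\<^sub>R y) \<le> a * f x + (1 - a) * f y - m / 2 * a * (1 - a) * (norm (x - y))\<^sup>2)"

text \<open>f is differentiable with an L-Lipschitz gradient.\<close>
definition lipschitz_gradient :: "real \<Rightarrow> ('a::real_inner \<Rightarrow> real) \<Rightarrow> bool" where
  "lipschitz_gradient L f \<longleftrightarrow> (\<exists>Df. (\<forall>x. (f has_derivative (\<lambda>v. Df x \<bullet> v)) (at x)) \<and> L-lipschitz_on UNIV Df)"

definition ext_convex :: "('a::real_vector \<Rightarrow> ereal) \<Rightarrow> bool" where
  "ext_convex g \<longleftrightarrow> (\<forall>x y a. 0 \<le> a \<and> a \<le> 1 \<longrightarrow>
     g (a *\<^sub>R x + (1 - a) *\<^sub>R y) \<le> ereal a * g x + ereal (1 - a) * g y)"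

definition proper_fun :: "('a \<Rightarrow> ereal) \<Rightarrow> bool" where
  "proper_fun g \<longleftrightarrow> (\<exists>x. g x < \<infinity>) \<and> (\<forall>x. - \<infinity> < g x)"

definition lsc :: "('a::topological_space \<Rightarrow> ereal) \<Rightarrow> bool" where
  "lsc g \<longleftrightarrow> (\<forall>x. g x \<le> Liminf (at x) g)"

section \<open>Optimization problem (Assumption 2)\<close>

text \<open>Moreau envelope \<open>M_{\<mu> g}(v) = min_x g(x) + \<parallel>x - v\<parallel>^2/(2\<mu>)\<close>.\<close>
definition moreau :: "real \<Rightarrow> ('a::real_normed_vector \<Rightarrow> ereal) \<Rightarrow> 'a \<Rightarrow> real" where
  "moreau \<mu> g v = real_of_ereal (INF x. g x + ereal ((norm (x - v))\<^sup>2 / (2 * \<mu>)))"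

text \<open>The saddle function whose saddle points are the optimal primal-dual pairs of \<open>P(t)\<close>.\<close>
definition saddle_fun ::
  "(real \<Rightarrow> real^'p \<Rightarrow> real) \<Rightarrow> (real \<Rightarrow> real^'r1 \<Rightarrow> real) \<Rightarrow> (real \<Rightarrow> real^'r2 \<Rightarrow> ereal) \<Rightarrow>
   (real \<Rightarrow> real^'q) \<Rightarrow> real^'p^'r1 \<Rightarrow> real^'q^'r1 \<Rightarrow> real^'p^'r2 \<Rightarrow> real^'q^'r2 \<Rightarrow> real \<Rightarrow>
   real \<Rightarrow> real^'p \<Rightarrow> real^'r2 \<Rightarrow> real" where
  "saddle_fun f h g w Pi1u Pi1w Pi2u Pi2w \<mu> t u l =
     f t u + h t (Pi1u *v u + Pi1w *v w t)
     + moreau \<mu> (g t) (Pi2u *v u + Pi2w *v w t + \<mu> *\<^sub>R l) - \<mu> / 2 * (norm l)\<^sup>2"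

text \<open>Objective of \<open>P(t)\<close> as a function of u (the constraints eliminate y1, y2).\<close>
definition objective ::
  "(real \<Rightarrow> real^'p \<Rightarrow> real) \<Rightarrow> (real \<Rightarrow> real^'r1 \<Rightarrow> real) \<Rightarrow> (real \<Rightarrow> real^'r2 \<Rightarrow> ereal) \<Rightarrow>
   (real \<Rightarrow> real^'q) \<Rightarrow> real^'p^'r1 \<Rightarrow> real^'q^'r1 \<Rightarrow> real^'p^'r2 \<Rightarrow> real^'q^'r2 \<Rightarrow>
   real \<Rightarrow> real^'p \<Rightarrow> ereal" where
  "objective f h g w Pi1u Pi1w Pi2u Pi2w t u =
     ereal (f t u + h t (Pi1u *v u + Pi1w *v w t)) + g t (Pi2u *v u + Pi2w *v w t)"

text \<open>\<open>P(t)\<close> is feasible: some u gives a finite objective value.\<close>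
definition feasible where
  "feasible f h g w Pi1u Pi1w Pi2u Pi2w t \<longleftrightarrow> (\<exists>u. objective f h g w Pi1u Pi1w Pi2u Pi2w t u < \<infinity>)"

end

theory Submission
  imports Defs "Jordan_Normal_Form.Spectral_Radius"
begin

no_notation vec_index (infixl "$" 100)
no_notation scalar_prod (infix "\<bullet>" 70)
hide_const (open) Matrix.mat

fun mpow :: "real^'n^'n \<Rightarrow> nat \<Rightarrow> real^'n^'n" where
  "mpow M 0 = mat 1"
| "mpow M (Suc k) = mpow M k ** M"

definition tj :: "(nat \<Rightarrow> 'n::finite) \<Rightarrow> real^'n^'n \<Rightarrow> complex mat" where
  "tj f M = Matrix.mat CARD('n) CARD('n) (\<lambda>(i,j). complex_of_real (M $ f i $ f j))"

lemma tj_carrier: "tj f (M::real^'n::finite^'n) \<in> carrier_mat CARD('n) CARD('n)"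
  unfolding tj_def by simp

lemma tj_dim[simp]: "dim_row (tj f (M::real^'n::finite^'n)) = CARD('n)" "dim_col (tj f M) = CARD('n)"
  by (auto simp: tj_def)

lemma sum_reindex_f:
  assumes bij: "bij_betw f {..<CARD('n)} (UNIV::'n::finite set)"
  shows "(\<Sum>k\<in>{0..<CARD('n)}. g (f k)) = (\<Sum>b\<in>UNIV. g b)"
  using sum.reindex_bij_betw[OF bij, of g] by (simp add: atLeast0LessThan)

lemma tj_mult:
  assumes bij: "bij_betw f {..<CARD('n)} (UNIV::'n::finite set)"
  shows "tj f (M ** N) = tj f M * tj f (N::real^'n^'n)"
proof (rule eq_matI)
  fix i j assume i: "i < dim_row (tj f M * tj f N)" and j: "j < dim_col (tj f M * tj f N)"
  hence i': "i < CARD('n)" and j': "j < CARD('n)" by (auto simp: tj_def)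
  have "(tj f M * tj f N) $$ (i,j) = (\<Sum>k\<in>{0..<CARD('n)}. complex_of_real (M $ f i $ f k) * complex_of_real (N $ f k $ f j))"
    using i' j' by (simp add: tj_def scalar_prod_def)
  also have "\<dots> = (\<Sum>b\<in>UNIV. complex_of_real (M $ f i $ b) * complex_of_real (N $ b $ f j))"
    using sum_reindex_f[OF bij, of "\<lambda>b. complex_of_real (M $ f i $ b) * complex_of_real (N $ b $ f j)"] .
  also have "\<dots> = tj f (M ** N) $$ (i,j)"
    using i' j' by (simp add: tj_def matrix_matrix_mult_def)
  finally show "tj f (M ** N) $$ (i, j) = (tj f M * tj f N) $$ (i, j)" by simp
qed (auto simp: tj_def)

lemma tj_one:
  assumes bij: "bij_betw f {..<CARD('n)} (UNIV::'n::finite set)"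
  shows "tj f (mat 1 :: real^'n^'n) = 1\<^sub>m CARD('n)"
proof (rule eq_matI)
  fix i j assume "i < dim_row (1\<^sub>m CARD('n))" "j < dim_col (1\<^sub>m CARD('n))"
  hence i: "i < CARD('n)" and j: "j < CARD('n)" by auto
  have "f i = f j \<longleftrightarrow> i = j" using bij i j unfolding bij_betw_def inj_on_def by auto
  thus "tj f (mat 1 :: real^'n^'n) $$ (i, j) = 1\<^sub>m CARD('n) $$ (i, j)"
    using i j by (simp add: tj_def Finite_Cartesian_Product.mat_def)
qed (auto simp: tj_def)

lemma tj_mpow:
  assumes bij: "bij_betw f {..<CARD('n)} (UNIV::'n::finite set)"
  shows "tj f (mpow M k) = (tj f (M::real^'n^'n)) ^\<^sub>m k"
  by (induction k) (auto simp: tj_one[OF bij] tj_mult[OF bij] tj_carrier)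

definition cplx :: "real^'n^'m \<Rightarrow> complex^'n^'m" where
  "cplx M = (\<chi> a b. complex_of_real (M $ a $ b))"

lemma bij_f_props:
  assumes bij: "bij_betw f {..<CARD('n)} (UNIV::'n::finite set)"
  shows "\<And>a. inv_into {..<CARD('n)} f a < CARD('n)" "\<And>a. f (inv_into {..<CARD('n)} f a) = a"
    "\<And>i. i < CARD('n) \<Longrightarrow> inv_into {..<CARD('n)} f (f i) = i"
  using bij inv_into_into[of _ f "{..<CARD('n)}"] by (auto simp: bij_betw_def f_inv_into_f inv_into_f_f)

lemma tj_eig:
  assumes bij: "bij_betw f {..<CARD('n)} (UNIV::'n::finite set)"
    and ev: "eigenvector (tj f (M::real^'n^'n)) v l"
  shows "\<exists>w::complex^'n. w \<noteq> 0 \<and> cplx M *v w = l *s w"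
proof -
  let ?n = "CARD('n)"
  let ?g = "inv_into {..<?n} f"
  note bp = bij_f_props[OF bij]
  from ev have v: "v \<in> carrier_vec ?n" and v0: "v \<noteq> 0\<^sub>v ?n" and eq: "tj f M *\<^sub>v v = l \<cdot>\<^sub>v v"
    unfolding eigenvector_def by auto
  define w where "w = (\<chi> a. vec_index v (?g a))"
  have "w \<noteq> 0"
  proof
    assume "w = 0"
    hence z: "vec_index v (?g a) = 0" for a
    proof -
      have "w $ a = 0" using \<open>w = 0\<close> by simp
      thus ?thesis unfolding w_def by simp
    qed
    have "v = 0\<^sub>v ?n"
    proof (rule eq_vecI)
      fix i assume "i < dim_vec (0\<^sub>v ?n :: complex vec)"
      hence i: "i < ?n" by simp
      have "vec_index v i = vec_index v (?g (f i))" using bp(3)[OF i] by simp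
      thus "vec_index v i = vec_index (0\<^sub>v ?n) i" using z i by simp
    qed (use v in simp)
    with v0 show False by simp
  qed
  moreover have "cplx M *v w = l *s w"
  proof (rule Finite_Cartesian_Product.vec_eq_iff[THEN iffD2], rule allI)
    fix a
    define i where "i = ?g a"
    have i: "i < ?n" and a: "a = f i" using bp unfolding i_def by auto
    have "(cplx M *v w) $ a = (\<Sum>b\<in>UNIV. complex_of_real (M $ f i $ b) * vec_index v (?g b))"
      by (simp add: matrix_vector_mult_def cplx_def w_def a)
    also have "\<dots> = (\<Sum>k\<in>{0..<?n}. complex_of_real (M $ f i $ f k) * vec_index v (?g (f k)))"
      using sum_reindex_f[OF bij, of "\<lambda>b. complex_of_real (M $ f i $ b) * vec_index v (?g b)"] by simp
    also have "\<dots> = (\<Sum>k\<in>{0..<?n}. complex_of_real (M $ f i $ f k) * vec_index v k)"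
      using bp by (intro sum.cong) auto
    also have "\<dots> = vec_index (tj f M *\<^sub>v v) i"
      using i v by (simp add: tj_def scalar_prod_def)
    also have "\<dots> = l * vec_index v i" using eq i v by simp
    also have "\<dots> = (l *s w) $ a" by (simp add: w_def i_def)
    finally show "(cplx M *v w) $ a = (l *s w) $ a" .
  qed
  ultimately show ?thesis by blast
qed

lemma eig_tj:
  assumes bij: "bij_betw f {..<CARD('n)} (UNIV::'n::finite set)"
    and w0: "(w::complex^'n) \<noteq> 0" and eq: "cplx (M::real^'n^'n) *v w = l *s w"
  shows "eigenvalue (tj f M) l"
proof -
  let ?n = "CARD('n)"
  let ?g = "inv_into {..<?n} f"
  note bp = bij_f_props[OF bij]
  define v where "v = vec ?n (\<lambda>i. w $ f i)"
  have v: "v \<in> carrier_vec ?n" unfolding v_def by simp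
  have v0: "v \<noteq> 0\<^sub>v ?n"
  proof
    assume "v = 0\<^sub>v ?n"
    hence z: "w $ f i = 0" if "i < ?n" for i
    proof -
      have "vec_index v i = 0" using \<open>v = 0\<^sub>v ?n\<close> that by simp
      thus ?thesis using that unfolding v_def by simp
    qed
    have "w = 0"
    proof (rule Finite_Cartesian_Product.vec_eq_iff[THEN iffD2], rule allI)
      fix a show "w $ a = 0 $ a" using z[OF bp(1)[of a]] bp(2)[of a] by simp
    qed
    with w0 show False by simp
  qed
  have "tj f M *\<^sub>v v = l \<cdot>\<^sub>v v"
  proof (rule eq_vecI)
    fix i assume "i < dim_vec (l \<cdot>\<^sub>v v)"
    hence i: "i < ?n" by (simp add: v_def)
    have "vec_index (tj f M *\<^sub>v v) i = (\<Sum>k\<in>{0..<?n}. complex_of_real (M $ f i $ f k) * w $ f k)"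
      using i by (simp add: tj_def scalar_prod_def v_def)
    also have "\<dots> = (\<Sum>b\<in>UNIV. complex_of_real (M $ f i $ b) * w $ b)"
      using sum_reindex_f[OF bij, of "\<lambda>b. complex_of_real (M $ f i $ b) * w $ b"] .
    also have "\<dots> = (cplx M *v w) $ f i" by (simp add: matrix_vector_mult_def cplx_def)
    also have "\<dots> = l * w $ f i" using eq by simp
    also have "\<dots> = vec_index (l \<cdot>\<^sub>v v) i" using i by (simp add: v_def)
    finally show "vec_index (tj f M *\<^sub>v v) i = vec_index (l \<cdot>\<^sub>v v) i" .
  qed (simp add: v_def tj_def)
  thus ?thesis using v v0 unfolding eigenvalue_def eigenvector_def by (auto simp: tj_def)
qed

lemma cplx_affine:
  fixes A :: "real^'n::finite^'n"
  shows "cplx (c *\<^sub>R (mat 1 + h *\<^sub>R A)) *v w = complex_of_real c *s (w + complex_of_real h *s (cplx A *v w))"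
proof (rule Finite_Cartesian_Product.vec_eq_iff[THEN iffD2], rule allI)
  fix a
  have "(cplx (c *\<^sub>R (mat 1 + h *\<^sub>R A)) *v w) $ a = (\<Sum>b\<in>UNIV. cplx (c *\<^sub>R (mat 1 + h *\<^sub>R A)) $ a $ b * w $ b)"
    by (simp add: matrix_vector_mult_def)
  also have "\<dots> = (\<Sum>b\<in>UNIV. (if b = a then complex_of_real c * w $ b else 0) + complex_of_real c * complex_of_real h * (complex_of_real (A $ a $ b) * w $ b))"
    by (intro sum.cong refl) (auto simp: cplx_def Finite_Cartesian_Product.mat_def algebra_simps)
  also have "\<dots> = complex_of_real c * w $ a + complex_of_real c * complex_of_real h * (\<Sum>b\<in>UNIV. complex_of_real (A $ a $ b) * w $ b)"
    by (simp add: sum.distrib sum_distrib_left[symmetric] sum.delta)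
  also have "\<dots> = (complex_of_real c *s (w + complex_of_real h *s (cplx A *v w))) $ a"
    by (simp add: matrix_vector_mult_def cplx_def algebra_simps)
  finally show "(cplx (c *\<^sub>R (mat 1 + h *\<^sub>R A)) *v w) $ a = (complex_of_real c *s (w + complex_of_real h *s (cplx A *v w))) $ a" .
qed

lemma mpow_scale: "mpow (c *\<^sub>R M) k = (c ^ k) *\<^sub>R mpow M k"
  by (induction k) (simp_all add: matrix_scalar_ac scalar_matrix_assoc[symmetric])

lemma mpow_Suc_vec: "mpow M (Suc k) *v x = mpow M k *v (M *v x)"
  by (simp add: matrix_vector_mul_assoc)

lemma matrix_entry_bound:
  fixes N :: "real^'n::finite^'m::finite"
  assumes "\<And>a b. \<bar>N $ a $ b\<bar> \<le> \<beta>"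
  shows "norm (N *v x) \<le> real CARD('m) * (real CARD('n) * \<beta>) * norm x"
proof -
  have comp: "\<bar>(N *v x) $ a\<bar> \<le> real CARD('n) * \<beta> * norm x" for a
  proof -
    have "\<bar>(N *v x) $ a\<bar> = \<bar>\<Sum>b\<in>UNIV. N $ a $ b * x $ b\<bar>" by (simp add: matrix_vector_mult_def)
    also have "\<dots> \<le> (\<Sum>b\<in>UNIV. \<bar>N $ a $ b * x $ b\<bar>)" by (rule sum_abs)
    also have "\<dots> \<le> (\<Sum>b\<in>(UNIV::'n set). \<beta> * norm x)"
    proof (rule sum_mono)
      fix b
      have "\<bar>N $ a $ b * x $ b\<bar> = \<bar>N $ a $ b\<bar> * \<bar>x $ b\<bar>" by (simp add: abs_mult)
      also have "\<dots> \<le> \<beta> * norm x"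
        by (rule mult_mono[OF assms component_le_norm_cart]) (auto intro: order_trans[OF abs_ge_zero assms])
      finally show "\<bar>N $ a $ b * x $ b\<bar> \<le> \<beta> * norm x" .
    qed
    also have "\<dots> = real CARD('n) * \<beta> * norm x" by simp
    finally show ?thesis .
  qed
  have "norm (N *v x) \<le> (\<Sum>a\<in>UNIV. \<bar>(N *v x) $ a\<bar>)" by (rule norm_le_l1_cart)
  also have "\<dots> \<le> (\<Sum>a\<in>(UNIV::'m set). real CARD('n) * \<beta> * norm x)" by (rule sum_mono[OF comp])
  also have "\<dots> = real CARD('m) * (real CARD('n) * \<beta>) * norm x" by simp
  finally show ?thesis .
qed

lemma matrix_sum_vec: "(sum F S) *v x = (\<Sum>k\<in>S. F k *v (x::real^'n::finite))"
  by (induction S rule: infinite_finite_induct) (auto simp: matrix_vector_mult_add_rdistrib)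

lemma transpose_plus: "transpose (A + B) = transpose A + transpose (B::real^'n^'m)"
  by (simp add: transpose_def Finite_Cartesian_Product.vec_eq_iff)

lemma transpose_zero: "transpose (0::real^'n^'m) = 0"
  by (simp add: transpose_def Finite_Cartesian_Product.vec_eq_iff)

lemma transpose_sum: "transpose (sum F S) = (\<Sum>k\<in>S. transpose (F k::real^'n^'m))"
  by (induction S rule: infinite_finite_induct) (auto simp: transpose_plus transpose_zero)

lemma sym_form: "transpose X = X \<Longrightarrow> y \<bullet> (X *v x) = x \<bullet> (X *v (y::real^'n::finite))"
  by (metis dot_lmul_matrix inner_commute transpose_matrix_vector)

lemma gram_form: "x \<bullet> ((transpose N ** N) *v x) = (norm (N *v (x::real^'n::finite)))\<^sup>2"
  by (metis dot_lmul_matrix inner_commute matrix_vector_mul_assoc[symmetric] power2_norm_eq_inner transpose_matrix_vector)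

lemma hurwitz_tj:
  assumes bij: "bij_betw f {..<CARD('n)} (UNIV::'n::finite set)"
    and H: "hurwitz (A::real^'n^'n)" and ev: "eigenvalue (tj f A) l"
  shows "Re l < 0"
proof -
  from ev obtain v where "eigenvector (tj f A) v l" unfolding eigenvalue_def by auto
  from tj_eig[OF bij this] obtain w where "w \<noteq> 0" "cplx A *v w = l *s w" by auto
  with H show ?thesis unfolding hurwitz_def cplx_def by blast
qed

lemma lyapunov:
  fixes A :: "real^'n::finite^'n"
  assumes H: "hurwitz A"
  shows "\<exists>X \<kappa>. transpose X = X \<and> 0 < \<kappa> \<and> (\<forall>x. (norm x)\<^sup>2 \<le> x \<bullet> (X *v x))
           \<and> (\<forall>x. x \<bullet> (X *v (A *v x)) \<le> - \<kappa> * (norm x)\<^sup>2)"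
proof -
  obtain f where bij: "bij_betw f {..<CARD('n)} (UNIV::'n set)"
    using ex_bij_betw_nat_finite[of "UNIV::'n set"] by (auto simp: atLeast0LessThan)
  let ?n = "CARD('n)"
  have npos: "0 < ?n" by simp
  note bp = bij_f_props[OF bij]
  define S where "S = spectrum (tj f A)"
  have finS: "finite S" unfolding S_def by (rule card_finite_spectrum(1)[OF tj_carrier])
  have ReS: "Re l < 0" if "l \<in> S" for l
    using hurwitz_tj[OF bij H] that unfolding S_def spectrum_def by auto
  define h where "h = Min (insert 1 ((\<lambda>l. - Re l / (cmod l)\<^sup>2) ` S))"
  have qpos: "0 < - Re l / (cmod l)\<^sup>2" if "l \<in> S" for l
  proof -
    have "Re l < 0" using ReS[OF that] .
    hence "l \<noteq> 0" by auto
    hence "0 < (cmod l)\<^sup>2" by simp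
    moreover have "0 < - Re l" using \<open>Re l < 0\<close> by simp
    ultimately show ?thesis by (intro divide_pos_pos)
  qed
  have hpos: "0 < h" unfolding h_def using finS qpos by auto
  have hle: "h \<le> - Re l / (cmod l)\<^sup>2" if "l \<in> S" for l
    unfolding h_def using finS that by (intro Min_le) auto
  have lt1: "cmod (1 + complex_of_real h * l) < 1" if "l \<in> S" for l
  proof -
    have "l \<noteq> 0" using ReS[OF that] by auto
    hence l0: "0 < (cmod l)\<^sup>2" by simp
    have "h * (cmod l)\<^sup>2 \<le> (- Re l / (cmod l)\<^sup>2) * (cmod l)\<^sup>2"
      using hle[OF that] l0 by (intro mult_right_mono) auto
    also have "\<dots> = - Re l" using l0 by simp
    finally have "h * (cmod l)\<^sup>2 \<le> - Re l" .
    hence hh: "h * ((Re l)\<^sup>2 + (Im l)\<^sup>2) \<le> - Re l" by (simp add: cmod_power2)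
    have "(cmod (1 + complex_of_real h * l))\<^sup>2 = (1 + h * Re l)\<^sup>2 + (h * Im l)\<^sup>2"
      by (simp add: cmod_power2)
    also have "\<dots> = 1 + 2 * h * Re l + h * (h * ((Re l)\<^sup>2 + (Im l)\<^sup>2))"
      by (simp add: power2_eq_square algebra_simps)
    also have "\<dots> \<le> 1 + 2 * h * Re l + h * (- Re l)"
      using hh hpos by (intro add_left_mono mult_left_mono) auto
    also have "\<dots> < 1" using hpos ReS[OF that] by (simp add: mult_pos_neg)
    finally have "(cmod (1 + complex_of_real h * l))\<^sup>2 < 1\<^sup>2" by simp
    thus ?thesis by (rule power_less_imp_less_base) simp
  qed
  define r0 where "r0 = Max (insert 0 ((\<lambda>l. cmod (1 + complex_of_real h * l)) ` S))"
  have r0lt: "r0 < 1" unfolding r0_def using finS lt1 by auto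
  have r0ge: "cmod (1 + complex_of_real h * l) \<le> r0" if "l \<in> S" for l
    unfolding r0_def using finS that by (intro Max_ge) auto
  have r00: "0 \<le> r0" unfolding r0_def using finS by (intro Max_ge) auto
  define \<rho> where "\<rho> = (1 + r0) / 2"
  have rho: "0 < \<rho>" "\<rho> < 1" "r0 < \<rho>" unfolding \<rho>_def using r0lt r00 by auto
  define M where "M = mat 1 + h *\<^sub>R A"
  define M' where "M' = (1 / \<rho>) *\<^sub>R M"
  have spec': "cmod \<nu> < 1" if ev: "eigenvalue (tj f M') \<nu>" for \<nu>
  proof -
    from ev obtain v where "eigenvector (tj f M') v \<nu>" unfolding eigenvalue_def by auto
    from tj_eig[OF bij this] obtain w where w0: "w \<noteq> 0" and eq: "cplx M' *v w = \<nu> *s w" by auto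
    have eq2: "complex_of_real (1/\<rho>) *s (w + complex_of_real h *s (cplx A *v w)) = \<nu> *s w"
      using eq unfolding M'_def M_def cplx_affine .
    define l where "l = (complex_of_real \<rho> * \<nu> - 1) / complex_of_real h"
    have "cplx A *v w = l *s w"
    proof (rule Finite_Cartesian_Product.vec_eq_iff[THEN iffD2], rule allI)
      fix a
      from eq2 have "complex_of_real (1/\<rho>) * (w $ a + complex_of_real h * (cplx A *v w) $ a) = \<nu> * w $ a"
        by (metis vector_add_component vector_smult_component)
      thus "(cplx A *v w) $ a = (l *s w) $ a" using rho hpos
        by (simp add: l_def field_simps)
    qed
    from eig_tj[OF bij w0 this] have "l \<in> S" unfolding S_def spectrum_def by simp
    from r0ge[OF this] rho have "cmod (1 + complex_of_real h * l) < \<rho>" by simp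
    moreover have "1 + complex_of_real h * l = complex_of_real \<rho> * \<nu>" using hpos
      by (simp add: l_def field_simps)
    ultimately have "\<rho> * cmod \<nu> < \<rho> * 1" using rho by (simp add: norm_mult)
    thus ?thesis using rho by simp
  qed
  have sr: "spectral_radius (tj f M') < 1"
  proof -
    have fin: "finite (spectrum (tj f M'))" by (rule card_finite_spectrum(1)[OF tj_carrier])
    have ne: "spectrum (tj f M') \<noteq> {}" by (rule spectrum_non_empty[OF tj_carrier npos])
    show ?thesis unfolding spectral_radius_def using fin ne spec' by (auto simp: spectrum_def)
  qed
  obtain c where c: "\<And>k. norm_bound (tj f M' ^\<^sub>m k) c"
    using spectral_radius_jnf_norm_bound_less_1_upper_triangular[OF tj_carrier sr] by auto
  have entry: "\<bar>mpow M k $ a $ b\<bar> \<le> c * \<rho> ^ k" for k a b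
  proof -
    define i where "i = inv_into {..<?n} f a"
    define j where "j = inv_into {..<?n} f b"
    have ij: "i < ?n" "j < ?n" "f i = a" "f j = b" using bp unfolding i_def j_def by auto
    have eqk: "tj f M' ^\<^sub>m k = tj f (mpow M' k)" by (simp add: tj_mpow[OF bij])
    have "norm_bound (tj f (mpow M' k)) c" using c[of k] unfolding eqk .
    hence "norm ((tj f (mpow M' k)) $$ (i, j)) \<le> c" using ij unfolding norm_bound_def by simp
    have eqc: "complex_of_real ((1/\<rho>)^k * y) = (1 / complex_of_real \<rho>)^k * complex_of_real y" for y
      by (simp add: of_real_mult of_real_power)
    have "norm (complex_of_real ((1/\<rho>)^k * mpow M k $ a $ b)) \<le> c"
      unfolding eqc using \<open>norm ((tj f (mpow M' k)) $$ (i, j)) \<le> c\<close> ij by (simp add: tj_def M'_def mpow_scale)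
    hence "\<bar>(1/\<rho>)^k * mpow M k $ a $ b\<bar> \<le> c" by (simp only: norm_of_real)
    hence "(1/\<rho>)^k * \<bar>mpow M k $ a $ b\<bar> \<le> c" using rho by (simp add: abs_mult)
    thus ?thesis using rho by (simp add: field_simps)
  qed
  have c1: "1 \<le> c"
  proof -
    obtain a :: 'n where True by simp
    from entry[of 0 a a] show ?thesis by (simp add: Finite_Cartesian_Product.mat_def)
  qed
  define nn where "nn = real ?n"
  have nn: "1 \<le> nn" unfolding nn_def using npos by linarith
  obtain K0 where K0: "\<rho> ^ K0 < 1 / (2 * nn * nn * c)"
    using real_arch_pow_inv[of "1 / (2 * nn * nn * c)" \<rho>] rho nn c1 by auto
  define K where "K = Suc K0"
  have rK: "\<rho> ^ K \<le> \<rho> ^ K0" unfolding K_def using rho by (simp add: power_decreasing)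
  have decay: "norm (mpow M K *v x) \<le> norm x / 2" for x
  proof -
    have "norm (mpow M K *v x) \<le> nn * (nn * (c * \<rho> ^ K)) * norm x"
      unfolding nn_def by (rule matrix_entry_bound[OF entry])
    also have "\<dots> \<le> nn * (nn * (c * (1 / (2 * nn * nn * c)))) * norm x"
      using rK K0 nn c1 by (intro mult_right_mono mult_left_mono) auto
    also have "\<dots> = norm x / 2" using nn c1 by (simp add: field_simps)
    finally show ?thesis .
  qed
  define X where "X = (\<Sum>k<K. transpose (mpow M k) ** mpow M k)"
  have symX: "transpose X = X"
    unfolding X_def transpose_sum by (simp add: matrix_transpose_mul)
  have formX: "x \<bullet> (X *v x) = (\<Sum>k<K. (norm (mpow M k *v x))\<^sup>2)" for x
    unfolding X_def matrix_sum_vec inner_sum_right gram_form ..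
  have geI: "(norm x)\<^sup>2 \<le> x \<bullet> (X *v x)" for x
    unfolding formX K_def sum.lessThan_Suc_shift by (simp add: sum_nonneg)
  have tele: "(M *v x) \<bullet> (X *v (M *v x)) = x \<bullet> (X *v x) + (norm (mpow M K *v x))\<^sup>2 - (norm x)\<^sup>2" for x
  proof -
    have "(M *v x) \<bullet> (X *v (M *v x)) = (\<Sum>k<K. (norm (mpow M (Suc k) *v x))\<^sup>2)"
      unfolding formX mpow_Suc_vec ..
    moreover have "(\<Sum>k<Suc K. (norm (mpow M k *v x))\<^sup>2) = (norm x)\<^sup>2 + (\<Sum>k<K. (norm (mpow M (Suc k) *v x))\<^sup>2)"
      unfolding sum.lessThan_Suc_shift by simp
    moreover have "(\<Sum>k<Suc K. (norm (mpow M k *v x))\<^sup>2) = x \<bullet> (X *v x) + (norm (mpow M K *v x))\<^sup>2"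
      unfolding formX by simp
    ultimately show ?thesis by linarith
  qed
  have key: "x \<bullet> (X *v (A *v x)) \<le> - (3 / (8 * h)) * (norm x)\<^sup>2" for x
  proof -
    have Mx: "M *v x = x + h *\<^sub>R (A *v x)"
      unfolding M_def by (simp add: matrix_vector_mult_add_rdistrib scaleR_matrix_vector_assoc)
    have s1: "(A *v x) \<bullet> (X *v x) = x \<bullet> (X *v (A *v x))" by (rule sym_form[OF symX])
    have "(M *v x) \<bullet> (X *v (M *v x)) = x \<bullet> (X *v x) + 2 * h * (x \<bullet> (X *v (A *v x))) + h\<^sup>2 * ((A *v x) \<bullet> (X *v (A *v x)))"
      unfolding Mx using s1
      by (simp add: matrix_vector_right_distrib matrix_vector_mult_scaleR inner_add_left inner_add_right power2_eq_square algebra_simps)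
    moreover have "0 \<le> (A *v x) \<bullet> (X *v (A *v x))" using geI[of "A *v x"] by (meson order_trans zero_le_power2)
    moreover have "(norm (mpow M K *v x))\<^sup>2 \<le> (norm x / 2)\<^sup>2"
      using decay[of x] by (simp add: power_mono)
    ultimately have "2 * h * (x \<bullet> (X *v (A *v x))) \<le> (norm x / 2)\<^sup>2 - (norm x)\<^sup>2"
      using tele[of x] mult_nonneg_nonneg[OF zero_le_power2[of h] \<open>0 \<le> (A *v x) \<bullet> (X *v (A *v x))\<close>] by linarith
    hence "2 * h * (x \<bullet> (X *v (A *v x))) \<le> - (3/4) * (norm x)\<^sup>2" by (simp add: power_divide)
    thus ?thesis using hpos by (simp add: field_simps)
  qed
  show ?thesis
    using symX geI key hpos by (intro exI[of _ X] exI[of _ "3 / (8 * h)"]) auto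
qed


definition j2 :: "real^'a::finite \<Rightarrow> real^'b::finite \<Rightarrow> real^('a + 'b)" where
  "j2 x y = (\<chi> i. case i of Inl a \<Rightarrow> x $ a | Inr b \<Rightarrow> y $ b)"

lemma j2_Inl[simp]: "j2 x y $ Inl a = x $ a" and j2_Inr[simp]: "j2 x y $ Inr b = y $ b"
  by (simp_all add: j2_def)

lemma sum_UNIV_Plus: "(\<Sum>i\<in>(UNIV::('a::finite + 'b::finite) set). g i) = (\<Sum>a\<in>UNIV. g (Inl a)) + (\<Sum>b\<in>UNIV. g (Inr b))"
proof -
  have "(\<Sum>i\<in>(UNIV::('a + 'b) set). g i) = (\<Sum>i\<in>(UNIV::'a set) <+> (UNIV::'b set). g i)" by simp
  also have "\<dots> = (\<Sum>a\<in>UNIV. g (Inl a)) + (\<Sum>b\<in>UNIV. g (Inr b))"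
    by (subst sum.Plus) (auto simp: comp_def)
  finally show ?thesis .
qed

lemma j2_inner[simp]: "j2 x y \<bullet> j2 x' y' = x \<bullet> x' + y \<bullet> y'"
  by (simp add: inner_vec_def sum_UNIV_Plus)

lemma j2_split: "z = j2 (\<chi> a. z $ Inl a) (\<chi> b. z $ Inr b)"
  by (auto simp: Finite_Cartesian_Product.vec_eq_iff j2_def split: sum.split)

lemma j2_add[simp]: "j2 x y + j2 x' y' = j2 (x + x') (y + y')"
  by (auto simp: Finite_Cartesian_Product.vec_eq_iff j2_def split: sum.split)

lemma j2_scaleR[simp]: "c *\<^sub>R j2 x y = j2 (c *\<^sub>R x) (c *\<^sub>R y)"
  by (auto simp: Finite_Cartesian_Product.vec_eq_iff j2_def split: sum.split)

lemma j2_minus[simp]: "- j2 x y = j2 (- x) (- y)"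
  by (auto simp: Finite_Cartesian_Product.vec_eq_iff j2_def split: sum.split)

lemma block2_mult:
  "block2 M11 M12 M21 M22 *v j2 x y = j2 (M11 *v x + M12 *v y) (M21 *v x + M22 *v y)"
  by (auto simp: Finite_Cartesian_Product.vec_eq_iff block2_def j2_def matrix_vector_mult_def sum_UNIV_Plus
      split: sum.split)

lemma block3_mult:
  "block3 M11 M12 M13 M21 M22 M23 M31 M32 M33 *v j2 x (j2 y z) =
   j2 (M11 *v x + M12 *v y + M13 *v z) (j2 (M21 *v x + M22 *v y + M23 *v z) (M31 *v x + M32 *v y + M33 *v z))"
  by (auto simp: Finite_Cartesian_Product.vec_eq_iff block3_def j2_def matrix_vector_mult_def sum_UNIV_Plus
      split: sum.split)

lemma transpose_block2:
  "transpose (block2 M11 M12 M21 M22) = block2 (transpose M11) (transpose M21) (transpose M12) (transpose M22)"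
  by (simp add: Finite_Cartesian_Product.vec_eq_iff block2_def transpose_def split: sum.split)

lemma transpose_block3:
  "transpose (block3 M11 M12 M13 M21 M22 M23 M31 M32 M33) =
   block3 (transpose M11) (transpose M21) (transpose M31) (transpose M12) (transpose M22) (transpose M32)
          (transpose M13) (transpose M23) (transpose M33)"
  by (simp add: Finite_Cartesian_Product.vec_eq_iff block3_def transpose_def split: sum.split)

lemma tr_inner: "x \<bullet> (transpose N *v y) = (N *v x) \<bullet> (y::real^'m::finite)"
  by (metis dot_lmul_matrix inner_commute transpose_matrix_vector)

lemma sym_inner: "transpose P = P \<Longrightarrow> x \<bullet> (P *v y) = (P *v x) \<bullet> (y::real^'m::finite)"
  by (metis tr_inner)

lemma transpose_uminus: "transpose (- M) = - transpose (M::real^'n^'m)"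
  by (simp add: transpose_def Finite_Cartesian_Product.vec_eq_iff)

lemma uminus_mat_vec: "(- M) *v x = - (M *v (x::real^'n::finite))"
  by (simp add: matrix_vector_mult_def Finite_Cartesian_Product.vec_eq_iff sum_negf)

lemma LMI_by_quad:
  fixes A' :: "real^'s::finite^'s" and Bm :: "real^'i::finite^'s" and Cm :: "real^'s^'o::finite"
    and P :: "real^'s^'s" and X :: "real^('o+'i)^('o+'i)"
  assumes symP: "transpose P = P" and symX: "transpose X = X"
    and Q: "\<And>\<xi> \<zeta>. 2 * ((P *v \<xi>) \<bullet> (A' *v \<xi> + Bm *v \<zeta>)) + (j2 (Cm *v \<xi>) \<zeta>) \<bullet> (X *v j2 (Cm *v \<xi>) \<zeta>) \<le> 0"
  shows "LMI A' Bm Cm P X"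
proof -
  define N2 :: "real^('s+'i)^('o+'i)" where "N2 = block2 Cm 0 0 (mat 1)"
  have N1: "block2 (transpose Cm) 0 0 (mat 1) = transpose N2"
    unfolding N2_def transpose_block2 by (simp add: transpose_zero)
  define Mb where "Mb = block2 (transpose A' ** P + P ** A') (P ** Bm) (transpose Bm ** P) 0
      + block2 (transpose Cm) 0 0 (mat 1) ** X ** block2 Cm 0 0 (mat 1)"
  have Mb: "Mb = block2 (transpose A' ** P + P ** A') (P ** Bm) (transpose Bm ** P) 0 + transpose N2 ** X ** N2"
    unfolding Mb_def N1 N2_def ..
  have sym: "transpose Mb = Mb"
    unfolding Mb transpose_plus transpose_block2 matrix_transpose_mul transpose_transpose symP symX
    by (simp add: transpose_zero matrix_mul_assoc add.commute)
  have quad: "0 \<le> z \<bullet> (- Mb *v z)" for z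
  proof -
    obtain \<xi> \<zeta> where z: "z = j2 \<xi> \<zeta>" using j2_split by blast
    have N2z: "N2 *v z = j2 (Cm *v \<xi>) \<zeta>" unfolding N2_def z block2_mult by simp
    have "z \<bullet> (Mb *v z) = \<xi> \<bullet> ((transpose A' ** P) *v \<xi>) + \<xi> \<bullet> ((P ** A') *v \<xi>) + \<xi> \<bullet> ((P ** Bm) *v \<zeta>)
        + \<zeta> \<bullet> ((transpose Bm ** P) *v \<xi>) + z \<bullet> (transpose N2 *v (X *v (N2 *v z)))"
      unfolding Mb matrix_vector_mult_add_rdistrib inner_add_right
      by (simp add: matrix_vector_mul_assoc z block2_mult inner_add_right matrix_vector_mult_add_rdistrib matrix_mul_assoc)
    also have "\<dots> = 2 * ((P *v \<xi>) \<bullet> (A' *v \<xi> + Bm *v \<zeta>)) + (j2 (Cm *v \<xi>) \<zeta>) \<bullet> (X *v j2 (Cm *v \<xi>) \<zeta>)"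
      unfolding matrix_vector_mul_assoc[symmetric] tr_inner N2z sym_inner[OF symP, of \<xi>]
      by (simp add: inner_add_right inner_commute)
    finally have "z \<bullet> (Mb *v z) \<le> 0" using Q by simp
    thus ?thesis by (simp add: uminus_mat_vec)
  qed
  show ?thesis unfolding LMI_def nsd_def psd_def Mb_def[symmetric]
    using sym quad by (simp add: transpose_uminus)
qed


lemma young: "0 < t \<Longrightarrow> p * q \<le> p\<^sup>2 / (4 * t) + t * q\<^sup>2" for p q t :: real
proof -
  assume t: "0 < t"
  have "0 \<le> (p - 2 * t * q)\<^sup>2" by simp
  hence "4 * t * (p * q) \<le> p\<^sup>2 + 4 * t * (t * q\<^sup>2)" by (simp add: power2_eq_square algebra_simps)
  hence "4 * t * (p * q) \<le> 4 * t * (p\<^sup>2 / (4 * t) + t * q\<^sup>2)" using t by (simp add: algebra_simps)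
  thus ?thesis using t by (simp add: mult_le_cancel_left_pos)
qed

lemma mid_lem: "y < x \<Longrightarrow> 0 < y \<Longrightarrow> 0 < (x + y) / 2 \<and> (x + y) / 2 < x \<and> y < (x + y) / 2" for x y :: real
  by auto

lemma lemma_Y:
  fixes \<mu> M L :: real
  assumes mu: "0 < \<mu>" and M: "0 < M" and L: "- M < L"
  shows "\<exists>\<phi> \<phi>'. 0 < \<phi>' \<and> \<phi>' < \<phi> \<and> (\<phi> * L - \<mu>)\<^sup>2 < 4 * \<phi>' * \<mu> * M"
proof (cases "0 < L")
  case True
  show ?thesis using True mu M
    by (intro exI[of _ "\<mu> / L"] exI[of _ "\<mu> / (2 * L)"]) (auto simp: field_simps)
next
  case False
  hence L0: "L \<le> 0" by simp
  show ?thesis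
  proof (cases "L = 0")
    case True
    show ?thesis using True mu M
      by (intro exI[of _ "2 * \<mu> / M"] exI[of _ "\<mu> / M"]) (auto simp: field_simps power2_eq_square)
  next
    case False
    with L0 have Ln: "L < 0" by simp
    define a where "a = - L"
    have a: "0 < a" "a < M" using Ln L unfolding a_def by auto
    define \<phi> where "\<phi> = \<mu> / a"
    define \<phi>' where "\<phi>' = (\<mu> / a + \<mu> / M) / 2"
    have A: "\<mu> / M < \<mu> / a" using a mu by (simp add: divide_strict_left_mono)
    have B: "0 < \<mu> / M" using mu M by simp
    have p: "0 < \<phi>' \<and> \<phi>' < \<phi> \<and> \<mu> / M < \<phi>'" unfolding \<phi>_def \<phi>'_def
      using mid_lem[OF A B] .
    have La: "L = - a" unfolding a_def by simp
    have e: "\<phi> * L - \<mu> = - 2 * \<mu>" unfolding \<phi>_def La using a by (simp add: field_simps)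
    have "(\<phi> * L - \<mu>)\<^sup>2 = 4 * \<mu>\<^sup>2" unfolding e by (simp add: power2_eq_square)
    also have "\<dots> = 4 * (\<mu> / M) * \<mu> * M" using M by (simp add: field_simps power2_eq_square)
    also have "\<dots> < 4 * \<phi>' * \<mu> * M" using p mu M by (simp add: mult_strict_right_mono pos_divide_less_eq)
    finally show ?thesis using p by blast
  qed
qed

lemma opbound: "\<exists>K>0. \<forall>y. norm (N *v y) \<le> K * norm (y::real^'n::finite)"
proof -
  obtain K where "K > 0" "\<forall>y. norm (N *v y) \<le> norm y * K"
    using bounded_linear.pos_bounded[OF matrix_vector_mul_bounded_linear[of N]] by blast
  thus ?thesis by (auto simp: mult.commute)
qed

lemma quad_zero: fixes p r :: real
  assumes "\<And>t. 0 \<le> 2 * t * p + t\<^sup>2 * r" and "0 \<le> r" shows "p = 0"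
proof -
  define t where "t = - p / (r + 1)"
  have r1: "0 < r + 1" using assms(2) by simp
  have "0 \<le> 2 * t * p + t\<^sup>2 * r" by (rule assms(1))
  hence "0 \<le> (2 * t * p + t\<^sup>2 * r) * (r + 1)\<^sup>2" by simp
  also have "\<dots> = 2 * (t * (r + 1)) * p * (r + 1) + (t * (r + 1))\<^sup>2 * r" by (simp add: power2_eq_square algebra_simps)
  also have "t * (r + 1) = - p" unfolding t_def using r1 by simp
  also have "2 * (- p) * p * (r + 1) + (- p)\<^sup>2 * r = - p\<^sup>2 * (r + 2)" by (simp add: power2_eq_square algebra_simps)
  finally have "p\<^sup>2 * (r + 2) \<le> 0" by simp
  moreover have "0 < r + 2" using assms(2) by simp
  ultimately have "p\<^sup>2 \<le> 0" by (simp add: mult_le_0_iff)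
  thus ?thesis by simp
qed

lemma psd_zero:
  assumes Q: "psd Q" and z: "l \<bullet> (Q *v l) = 0"
  shows "Q *v l = (0::real^'n::finite)"
proof -
  have sym: "transpose Q = Q" and pos: "\<And>x. 0 \<le> x \<bullet> (Q *v x)" using Q unfolding psd_def by auto
  define y where "y = Q *v l"
  have "0 \<le> 2 * t * (y \<bullet> (Q *v l)) + t\<^sup>2 * (y \<bullet> (Q *v y))" for t
  proof -
    have "0 \<le> (l + t *\<^sub>R y) \<bullet> (Q *v (l + t *\<^sub>R y))" by (rule pos)
    also have "\<dots> = l \<bullet> (Q *v l) + t * (l \<bullet> (Q *v y)) + t * (y \<bullet> (Q *v l)) + t\<^sup>2 * (y \<bullet> (Q *v y))"
      by (simp add: matrix_vector_right_distrib matrix_vector_mult_scaleR inner_add_left inner_add_right power2_eq_square algebra_simps)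
    also have "l \<bullet> (Q *v y) = y \<bullet> (Q *v l)" using sym_form[OF sym] .
    finally show ?thesis using z by simp
  qed
  from quad_zero[OF this] pos[of y] have "y \<bullet> (Q *v l) = 0" by blast
  hence "y \<bullet> y = 0" unfolding y_def .
  thus ?thesis unfolding y_def by simp
qed

lemma kappa0_exists:
  fixes N :: "real^'p::finite^'r::finite" and Q :: "real^'r^'r"
  assumes Q: "psd Q" and nul: "\<And>l. transpose N *v l = 0 \<Longrightarrow> Q *v l = 0 \<Longrightarrow> l = 0"
  shows "\<exists>\<kappa>0>0. \<forall>l. \<kappa>0 * (norm l)\<^sup>2 \<le> (norm (transpose N *v l))\<^sup>2 + l \<bullet> (Q *v l)"
proof -
  define q where "q = (\<lambda>l::real^'r. (norm (transpose N *v l))\<^sup>2 + l \<bullet> (Q *v l))"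
  have pos: "\<And>x. 0 \<le> x \<bullet> (Q *v x)" using Q unfolding psd_def by auto
  have cont: "continuous_on (sphere 0 1) q"
    unfolding q_def
    by (intro continuous_intros linear_continuous_on matrix_vector_mul_bounded_linear)
  have ne: "sphere (0::real^'r) 1 \<noteq> {}"
  proof -
    have "norm (1::real^'r) \<noteq> 0" by (simp add: Finite_Cartesian_Product.vec_eq_iff)
    hence "(1 / norm (1::real^'r)) *\<^sub>R (1::real^'r) \<in> sphere 0 1" by simp
    thus ?thesis by blast
  qed
  obtain l0 where l0: "l0 \<in> sphere 0 1" and min: "\<And>y. y \<in> sphere 0 1 \<Longrightarrow> q l0 \<le> q y"
    using continuous_attains_inf[OF compact_sphere ne cont] by blast
  have k0: "0 < q l0"
  proof (rule ccontr)
    assume "\<not> 0 < q l0"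
    moreover have "0 \<le> (norm (transpose N *v l0))\<^sup>2" "0 \<le> l0 \<bullet> (Q *v l0)" using pos by auto
    ultimately have a: "(norm (transpose N *v l0))\<^sup>2 = 0" and b: "l0 \<bullet> (Q *v l0) = 0" unfolding q_def by linarith+
    from a have "transpose N *v l0 = 0" by simp
    moreover from psd_zero[OF Q b] have "Q *v l0 = 0" .
    ultimately have "l0 = 0" by (rule nul)
    with l0 show False by simp
  qed
  have hom: "q (c *\<^sub>R l) = c\<^sup>2 * q l" for c l
    unfolding q_def by (simp add: matrix_vector_mult_scaleR power2_eq_square algebra_simps)
  show ?thesis
  proof (intro exI[of _ "q l0"] conjI allI k0)
    fix l :: "real^'r"
    show "q l0 * (norm l)\<^sup>2 \<le> (norm (transpose N *v l))\<^sup>2 + l \<bullet> (Q *v l)"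
    proof (cases "l = 0")
      case True thus ?thesis by simp
    next
      case False
      hence nl: "0 < norm l" by simp
      have "(1 / norm l) *\<^sub>R l \<in> sphere 0 1" using nl by simp
      from min[OF this] have "q l0 \<le> (1 / norm l)\<^sup>2 * q l" by (simp only: hom)
      hence "q l0 * (norm l)\<^sup>2 \<le> q l" using nl by (simp add: field_simps power2_eq_square)
      thus ?thesis unfolding q_def .
    qed
  qed
qed

lemma lip_nonneg: "lipschitz_gradient L f \<Longrightarrow> 0 \<le> L"
  unfolding lipschitz_gradient_def lipschitz_on_def by auto

lemma Lf_pos:
  fixes f :: "real^'p::finite \<Rightarrow> real"
  assumes sc: "strongly_convex m f" and lg: "lipschitz_gradient L f" and m: "0 < m"
  shows "0 < L"
proof (rule ccontr)
  assume "\<not> 0 < L"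
  with lip_nonneg[OF lg] have L0: "L = 0" by simp
  from lg obtain Df where der: "\<And>x. (f has_derivative (\<lambda>v. Df x \<bullet> v)) (at x)"
    and lip: "L-lipschitz_on UNIV Df" unfolding lipschitz_gradient_def by blast
  have Dc: "Df x = Df 0" for x using lip L0 unfolding lipschitz_on_def by auto
  define g where "g = (\<lambda>x. f x - Df 0 \<bullet> x)"
  have "(g has_derivative (\<lambda>h. 0)) (at x within UNIV)" for x
  proof -
    have "(g has_derivative (\<lambda>v. Df x \<bullet> v - Df 0 \<bullet> v)) (at x)"
      unfolding g_def by (intro derivative_intros der)
    thus ?thesis using Dc[of x] by simp
  qed
  then obtain k where k: "\<And>x. g x = k" using has_derivative_zero_constant[of UNIV g] by auto
  hence fx: "f x = k + Df 0 \<bullet> x" for x unfolding g_def by (metis add.commute diff_add_cancel)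
  define e :: "real^'p" where "e = 1"
  have e0: "e \<noteq> 0" unfolding e_def by (simp add: Finite_Cartesian_Product.vec_eq_iff)
  have "f ((1/2) *\<^sub>R e + (1 - 1/2) *\<^sub>R 0) \<le> (1/2) * f e + (1 - 1/2) * f 0 - m / 2 * (1/2) * (1 - 1/2) * (norm (e - 0))\<^sup>2"
    using sc unfolding strongly_convex_def by (metis (no_types) le_numeral_extra(4) less_eq_real_def one_le_numeral zero_less_divide_1_iff zero_less_numeral divide_le_eq_1_pos)
  hence "m / 8 * (norm e)\<^sup>2 \<le> 0" unfolding fx by (simp add: inner_scaleR_right algebra_simps)
  moreover have "0 < m / 8 * (norm e)\<^sup>2" using m e0 by simp
  ultimately show False by simp
qed


lemma hurwitz_inv:
  fixes A :: "real^'n::finite^'n"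
  assumes H: "hurwitz A"
  shows "A ** matrix_inv A = mat 1"
proof -
  have ker: "x = 0" if Ax: "A *v x = 0" for x
  proof (rule ccontr)
    assume x0: "x \<noteq> 0"
    define cx :: "complex^'n" where "cx = (\<chi> i. complex_of_real (x $ i))"
    have "cx \<noteq> 0" using x0 unfolding cx_def by (simp add: Finite_Cartesian_Product.vec_eq_iff)
    moreover have "(\<chi> i j. complex_of_real (A $ i $ j)) *v cx = 0 *s cx"
    proof -
      have "(\<chi> i j. complex_of_real (A $ i $ j)) *v cx = (\<chi> i. complex_of_real ((A *v x) $ i))"
        by (simp add: Finite_Cartesian_Product.vec_eq_iff matrix_vector_mult_def cx_def)
      thus ?thesis using Ax by (simp add: Finite_Cartesian_Product.vec_eq_iff)
    qed
    ultimately have "Re 0 < (0::real)" using H unfolding hurwitz_def by fastforce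
    thus False by simp
  qed
  hence "\<exists>B. B ** A = mat 1" using matrix_left_invertible_ker by blast
  hence "invertible A" using invertible_left_inverse by blast
  hence "\<exists>A'. A ** A' = mat 1 \<and> A' ** A = mat 1" unfolding invertible_def .
  hence "A ** matrix_inv A = mat 1 \<and> matrix_inv A ** A = mat 1"
    unfolding matrix_inv_def by (rule someI_ex)
  thus ?thesis by simp
qed

lemma vmul_inner: "u \<bullet> (z v* N) = z \<bullet> (N *v (u::real^'n::finite))"
  by (metis dot_lmul_matrix inner_commute)

lemma mv_neg: "N *v (- y) = - (N *v (y::real^'n::finite))"
  by (simp add: matrix_vector_mult_def Finite_Cartesian_Product.vec_eq_iff sum_negf)

lemma smat_vec[simp]: "(c *\<^sub>R mat 1) *v x = c *\<^sub>R (x::real^'n::finite)"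
  by (metis matrix_vector_mul_lid scaleR_matrix_vector_assoc)

lemma nmat_vec[simp]: "(- mat 1) *v x = - (x::real^'n::finite)"
  by (simp add: uminus_mat_vec)

lemma sq5: "(a + b + c + d + e)\<^sup>2 \<le> 5 * (a\<^sup>2 + b\<^sup>2 + c\<^sup>2 + d\<^sup>2 + e\<^sup>2)" for a b c d e :: real
proof -
  have "0 \<le> (a-b)\<^sup>2 + (a-c)\<^sup>2 + (a-d)\<^sup>2 + (a-e)\<^sup>2 + (b-c)\<^sup>2 + (b-d)\<^sup>2 + (b-e)\<^sup>2 + (c-d)\<^sup>2 + (c-e)\<^sup>2 + (d-e)\<^sup>2"
    by simp
  also have "\<dots> = 5 * (a\<^sup>2 + b\<^sup>2 + c\<^sup>2 + d\<^sup>2 + e\<^sup>2) - (a + b + c + d + e)\<^sup>2"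
    by (simp add: power2_eq_square algebra_simps)
  finally show ?thesis by simp
qed

lemma final_scalar:
  fixes a b lm s1 s2 se :: real
  assumes nn: "0 \<le> a" "0 \<le> b" "0 \<le> lm" "0 \<le> s1" "0 \<le> s2" "0 \<le> se"
    and V0: "V0 \<le> K * a\<^sup>2 + \<mu> * b\<^sup>2 + \<mu> * lm\<^sup>2 + 2 * \<delta> * K * b * lm"
    and Wa: "Wa \<le> - \<kappa>X * a\<^sup>2"
    and Gx: "Gx \<le> Cx * a * (b + lm + s1 + s2 + se)"
    and Gw: "Gw \<le> - \<mu> * m * b\<^sup>2 + c1 * b * s1 - \<phi>1 * s1\<^sup>2 + c2 * K * b * s2 - \<phi>2 * s2\<^sup>2 - se\<^sup>2 - \<delta> * \<kappa>0 * lm\<^sup>2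
                 + \<delta> * D * (2 * lm * b + lm * s1 + lm * s2 + lm * se + b * se)"
    and mu: "0 < \<mu>" and K: "0 < K" and kX: "0 < \<kappa>X" and k0: "0 < \<kappa>0" and D: "0 < D" and Cx: "0 \<le> Cx"
    and c1: "0 \<le> c1" and c2: "0 \<le> c2"
    and p1: "0 < \<phi>1'" "\<phi>1' < \<phi>1"
    and s1def: "\<sigma>1 = \<mu> * m - c1\<^sup>2 / (4 * \<phi>1')" and s1pos: "0 < \<sigma>1"
    and p2: "0 < \<phi>2'" "\<phi>2' < \<phi>2" "(c2 * K)\<^sup>2 < \<phi>2' * \<sigma>1"
    and k1: "\<kappa>1 = min (min (\<sigma>1 / 2) (\<phi>1 - \<phi>1')) (min (\<phi>2 - \<phi>2') 1)"
    and Cr: "Cr = 5 * D\<^sup>2 / \<kappa>0 + D"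
    and dl: "0 < \<delta>" "\<delta> \<le> \<kappa>1 / (2 * Cr)"
    and kk: "\<kappa> = min (\<kappa>1 / 2) (\<delta> * \<kappa>0 / 2)"
    and eps: "\<epsilon> = \<kappa>X / (5 * Cx\<^sup>2 / (2 * \<kappa>) + 1)"
    and rho: "0 \<le> \<rho>" "\<rho> * (K + \<mu> + \<delta> * K) \<le> min 1 (\<kappa> / 2)"
  shows "\<rho> * V0 + (1/\<epsilon>) * Wa + Gx + Gw \<le> 0"
proof -
  define W where "W = b\<^sup>2 + lm\<^sup>2 + s1\<^sup>2 + s2\<^sup>2 + se\<^sup>2"
  define S where "S = b + lm + s1 + s2 + se"
  have k1pos: "0 < \<kappa>1" unfolding k1 using s1pos p1 p2 by auto
  have k1le: "\<kappa>1 \<le> \<sigma>1 / 2" "\<kappa>1 \<le> \<phi>1 - \<phi>1'" "\<kappa>1 \<le> \<phi>2 - \<phi>2'" "\<kappa>1 \<le> 1" unfolding k1 by (auto simp: min_def)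
  have "0 \<le> 5 * D\<^sup>2 / \<kappa>0" using k0 by simp
  hence Crpos: "0 < Cr" unfolding Cr using D by linarith
  have kpos: "0 < \<kappa>" unfolding kk using k1pos dl k0 by auto
  have kle: "\<kappa> \<le> \<kappa>1 / 2" "\<kappa> \<le> \<delta> * \<kappa>0 / 2" unfolding kk by auto
  \<comment> \<open>step 1\<close>
  have st1: "c1 * b * s1 \<le> c1\<^sup>2 / (4 * \<phi>1') * b\<^sup>2 + \<phi>1' * s1\<^sup>2"
    using young[OF p1(1), of "c1 * b" s1] by (simp add: power_mult_distrib mult.assoc)
  \<comment> \<open>step 2\<close>
  have st2a: "c2 * K * b * s2 \<le> (c2 * K)\<^sup>2 / (4 * \<phi>2') * b\<^sup>2 + \<phi>2' * s2\<^sup>2"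
    using young[OF p2(1), of "c2 * K * b" s2] by (simp add: power_mult_distrib mult.assoc)
  have "(c2 * K)\<^sup>2 / (4 * \<phi>2') \<le> \<sigma>1 / 4"
    using p2 by (simp add: pos_divide_le_eq mult.commute)
  from mult_right_mono[OF this zero_le_power2[of b]]
  have st2: "c2 * K * b * s2 \<le> \<sigma>1 / 4 * b\<^sup>2 + \<phi>2' * s2\<^sup>2"
    using st2a by linarith
  \<comment> \<open>step 4\<close>
  define q where "q = 5 * D\<^sup>2 / (2 * \<kappa>0)"
  have yl: "D * (lm * y) \<le> \<kappa>0 / 10 * lm\<^sup>2 + q * y\<^sup>2" for y
  proof -
    have "D * lm * y \<le> (D * lm)\<^sup>2 / (4 * (\<kappa>0 / 10 / D\<^sup>2 * D\<^sup>2)) + 0" if "D = 0" using that by simp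
    have "(D * y) * lm \<le> (D * y)\<^sup>2 / (4 * (\<kappa>0 / 10)) + \<kappa>0 / 10 * lm\<^sup>2"
      by (rule young) (use k0 in simp)
    also have "(D * y)\<^sup>2 / (4 * (\<kappa>0 / 10)) = q * y\<^sup>2" unfolding q_def
      using k0 by (simp add: power_mult_distrib field_simps)
    finally show ?thesis by (simp add: algebra_simps)
  qed
  have ybs: "D * (b * se) \<le> D / 2 * b\<^sup>2 + D / 2 * se\<^sup>2"
  proof -
    have "b * se \<le> b\<^sup>2 / 2 + se\<^sup>2 / 2" using young[of "1/2" b se] by simp
    from mult_left_mono[OF this, of D] D show ?thesis by (simp add: algebra_simps)
  qed
  have st4: "D * (2 * lm * b + lm * s1 + lm * s2 + lm * se + b * se) \<le> \<kappa>0 / 2 * lm\<^sup>2 + Cr * (b\<^sup>2 + s1\<^sup>2 + s2\<^sup>2 + se\<^sup>2)"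
  proof -
    have "D * (2 * lm * b + lm * s1 + lm * s2 + lm * se + b * se) = 2 * (D * (lm * b)) + D * (lm * s1) + D * (lm * s2) + D * (lm * se) + D * (b * se)"
      by (simp add: algebra_simps)
    also have "\<dots> \<le> \<kappa>0 / 2 * lm\<^sup>2 + (2 * q + D / 2) * b\<^sup>2 + q * s1\<^sup>2 + q * s2\<^sup>2 + (q + D / 2) * se\<^sup>2"
      using yl[of b] yl[of s1] yl[of s2] yl[of se] ybs by (simp add: algebra_simps mult.commute[of lm b])
    also have "\<dots> \<le> \<kappa>0 / 2 * lm\<^sup>2 + Cr * (b\<^sup>2 + s1\<^sup>2 + s2\<^sup>2 + se\<^sup>2)"
    proof -
      have h1: "2 * q + D / 2 \<le> Cr" "q \<le> Cr" "q + D / 2 \<le> Cr"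
        unfolding Cr q_def using D k0 by (auto simp: field_simps)
      show ?thesis using mult_right_mono[OF h1(1), of "b\<^sup>2"] mult_right_mono[OF h1(2), of "s1\<^sup>2"]
          mult_right_mono[OF h1(2), of "s2\<^sup>2"] mult_right_mono[OF h1(3), of "se\<^sup>2"]
        by (simp add: algebra_simps)
    qed
    finally show ?thesis .
  qed
  \<comment> \<open>step 5\<close>
  have dCr: "\<delta> * Cr \<le> \<kappa>1 / 2" using dl Crpos by (simp add: pos_le_divide_eq field_simps)
  have st5: "\<delta> * D * (2 * lm * b + lm * s1 + lm * s2 + lm * se + b * se) \<le> \<delta> * \<kappa>0 / 2 * lm\<^sup>2 + \<kappa>1 / 2 * (b\<^sup>2 + s1\<^sup>2 + s2\<^sup>2 + se\<^sup>2)"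
  proof -
    have "\<delta> * D * (2 * lm * b + lm * s1 + lm * s2 + lm * se + b * se) \<le> \<delta> * (\<kappa>0 / 2 * lm\<^sup>2 + Cr * (b\<^sup>2 + s1\<^sup>2 + s2\<^sup>2 + se\<^sup>2))"
      using mult_left_mono[OF st4, of \<delta>] dl by (simp add: mult.assoc)
    also have "\<dots> \<le> \<delta> * \<kappa>0 / 2 * lm\<^sup>2 + \<kappa>1 / 2 * (b\<^sup>2 + s1\<^sup>2 + s2\<^sup>2 + se\<^sup>2)"
      using mult_right_mono[OF dCr, of "b\<^sup>2 + s1\<^sup>2 + s2\<^sup>2 + se\<^sup>2"] by (simp add: algebra_simps)
    finally show ?thesis .
  qed
  have GwW: "Gw \<le> - \<kappa> * W"
  proof -
    have "Gw \<le> - (3 * \<sigma>1 / 4) * b\<^sup>2 - (\<phi>1 - \<phi>1') * s1\<^sup>2 - (\<phi>2 - \<phi>2') * s2\<^sup>2 - se\<^sup>2 - \<delta> * \<kappa>0 * lm\<^sup>2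
        + \<delta> * \<kappa>0 / 2 * lm\<^sup>2 + \<kappa>1 / 2 * (b\<^sup>2 + s1\<^sup>2 + s2\<^sup>2 + se\<^sup>2)"
    proof -
      have e1: "c1\<^sup>2 / (4 * \<phi>1') * b\<^sup>2 = \<mu> * m * b\<^sup>2 - \<sigma>1 * b\<^sup>2" unfolding s1def by (simp add: algebra_simps)
      have e5: "\<kappa>1 / 2 * (b\<^sup>2 + s1\<^sup>2 + s2\<^sup>2 + se\<^sup>2) = \<kappa>1 / 2 * b\<^sup>2 + \<kappa>1 / 2 * s1\<^sup>2 + \<kappa>1 / 2 * s2\<^sup>2 + \<kappa>1 / 2 * se\<^sup>2"
        by (simp add: algebra_simps)
      have st1': "c1 * b * s1 \<le> \<mu> * m * b\<^sup>2 - \<sigma>1 * b\<^sup>2 + \<phi>1' * s1\<^sup>2" using st1 e1 by linarith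
      have "Gw \<le> - \<mu> * m * b\<^sup>2 + (\<mu> * m * b\<^sup>2 - \<sigma>1 * b\<^sup>2 + \<phi>1' * s1\<^sup>2) - \<phi>1 * s1\<^sup>2 + (\<sigma>1 / 4 * b\<^sup>2 + \<phi>2' * s2\<^sup>2) - \<phi>2 * s2\<^sup>2 - se\<^sup>2 - \<delta> * \<kappa>0 * lm\<^sup>2
        + (\<delta> * \<kappa>0 / 2 * lm\<^sup>2 + \<kappa>1 / 2 * (b\<^sup>2 + s1\<^sup>2 + s2\<^sup>2 + se\<^sup>2))"
        using Gw st1' st2 st5 by linarith
      thus ?thesis by (simp add: algebra_simps)
    qed
    also have "\<dots> \<le> - (\<kappa>1 / 2) * (b\<^sup>2 + s1\<^sup>2 + s2\<^sup>2 + se\<^sup>2) - \<delta> * \<kappa>0 / 2 * lm\<^sup>2"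
    proof -
      have "\<kappa>1 * b\<^sup>2 \<le> (3 * \<sigma>1 / 4 - \<kappa>1 / 2) * b\<^sup>2" using k1le k1pos by (intro mult_right_mono) auto
      moreover have "\<kappa>1 * s1\<^sup>2 \<le> (\<phi>1 - \<phi>1') * s1\<^sup>2" using k1le by (intro mult_right_mono) auto
      moreover have "\<kappa>1 * s2\<^sup>2 \<le> (\<phi>2 - \<phi>2') * s2\<^sup>2" using k1le by (intro mult_right_mono) auto
      moreover have "\<kappa>1 * se\<^sup>2 \<le> se\<^sup>2" using k1le k1pos by (intro mult_left_le_one_le) auto
      moreover have "0 \<le> \<sigma>1 * b\<^sup>2" using s1pos by simp
      ultimately show ?thesis by (simp add: algebra_simps)
    qed
    also have "\<dots> \<le> - \<kappa> * W"
    proof -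
      have "\<kappa> * (b\<^sup>2 + s1\<^sup>2 + s2\<^sup>2 + se\<^sup>2) \<le> \<kappa>1 / 2 * (b\<^sup>2 + s1\<^sup>2 + s2\<^sup>2 + se\<^sup>2)"
        using kle by (intro mult_right_mono) auto
      moreover have "\<kappa> * lm\<^sup>2 \<le> \<delta> * \<kappa>0 / 2 * lm\<^sup>2" using kle by (intro mult_right_mono) auto
      ultimately show ?thesis unfolding W_def by (simp add: algebra_simps)
    qed
    finally show ?thesis .
  qed
  \<comment> \<open>step 6\<close>
  have GxW: "Gx \<le> \<kappa> / 2 * W + 5 * Cx\<^sup>2 / (2 * \<kappa>) * a\<^sup>2"
  proof -
    have "Cx * a * S \<le> (Cx * a)\<^sup>2 / (4 * (\<kappa> / 10)) + \<kappa> / 10 * S\<^sup>2"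
      by (rule young) (use kpos in simp)
    also have "(Cx * a)\<^sup>2 / (4 * (\<kappa> / 10)) = 5 * Cx\<^sup>2 / (2 * \<kappa>) * a\<^sup>2"
      using kpos by (simp add: power_mult_distrib field_simps)
    also have "\<kappa> / 10 * S\<^sup>2 \<le> \<kappa> / 10 * (5 * W)"
      unfolding S_def W_def using sq5 kpos by (intro mult_left_mono) auto
    finally show ?thesis using Gx unfolding S_def by (simp add: algebra_simps)
  qed
  \<comment> \<open>step 7\<close>
  have dpos: "0 < 5 * Cx\<^sup>2 / (2 * \<kappa>) + 1"
  proof -
    have "0 \<le> 5 * Cx\<^sup>2 / (2 * \<kappa>)" using kpos by simp
    thus ?thesis by linarith
  qed
  have epos: "0 < \<epsilon>" unfolding eps using kX dpos by simp
  have invE: "1 / \<epsilon> = (5 * Cx\<^sup>2 / (2 * \<kappa>) + 1) / \<kappa>X"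
    unfolding eps using kX dpos by simp
  have WaE: "(1 / \<epsilon>) * Wa \<le> - (5 * Cx\<^sup>2 / (2 * \<kappa>) + 1) * a\<^sup>2"
  proof -
    have "(1 / \<epsilon>) * Wa \<le> (1 / \<epsilon>) * (- \<kappa>X * a\<^sup>2)" using Wa epos by (intro mult_left_mono) auto
    also have "\<dots> = - (5 * Cx\<^sup>2 / (2 * \<kappa>) + 1) * a\<^sup>2"
    proof -
      have gen: "(dd / kx) * (- kx * aa) = - dd * aa" if "0 < kx" for dd kx aa :: real using that by simp
      show ?thesis unfolding invE by (rule gen[OF kX])
    qed
    finally show ?thesis .
  qed
  \<comment> \<open>step 8\<close>
  have V0W: "\<rho> * V0 \<le> \<rho> * (K + \<mu> + \<delta> * K) * (a\<^sup>2 + W)"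
  proof -
    have "2 * \<delta> * K * b * lm \<le> \<delta> * K * (b\<^sup>2 + lm\<^sup>2)"
    proof -
      have "2 * b * lm \<le> b\<^sup>2 + lm\<^sup>2" using young[of "1/2" b lm] by simp
      from mult_left_mono[OF this, of "\<delta> * K"] dl K show ?thesis by (simp add: algebra_simps)
    qed
    hence "V0 \<le> K * a\<^sup>2 + (\<mu> + \<delta> * K) * (b\<^sup>2 + lm\<^sup>2)" using V0 by (simp add: algebra_simps)
    also have "\<dots> \<le> (K + \<mu> + \<delta> * K) * (a\<^sup>2 + W)"
      unfolding W_def using K mu dl by (simp add: algebra_simps mult_nonneg_nonneg add_nonneg_nonneg)
    finally show ?thesis using rho(1) by (simp add: mult_left_mono mult.assoc)
  qed
  have rr: "\<rho> * (K + \<mu> + \<delta> * K) \<le> 1" "\<rho> * (K + \<mu> + \<delta> * K) \<le> \<kappa> / 2" using rho(2) by auto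
  have W0: "0 \<le> W" unfolding W_def by simp
  have "\<rho> * V0 + (1/\<epsilon>) * Wa + Gx + Gw \<le> \<rho> * (K + \<mu> + \<delta> * K) * (a\<^sup>2 + W) - (5 * Cx\<^sup>2 / (2 * \<kappa>) + 1) * a\<^sup>2
      + (\<kappa> / 2 * W + 5 * Cx\<^sup>2 / (2 * \<kappa>) * a\<^sup>2) - \<kappa> * W"
    using V0W WaE GxW GwW by linarith
  also have "\<dots> = (\<rho> * (K + \<mu> + \<delta> * K) - 1) * a\<^sup>2 + (\<rho> * (K + \<mu> + \<delta> * K) - \<kappa> / 2) * W"
    by (simp add: algebra_simps)
  also have "\<dots> \<le> 0"
    using rr W0 by (intro add_nonpos_nonpos mult_nonpos_nonneg) auto
  finally show ?thesis .
qed


lemma hk: "\<bar>t\<bar> \<le> c \<Longrightarrow> k * t \<le> \<bar>k\<bar> * c" for t c k :: real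
  by (metis abs_ge_self abs_ge_zero abs_mult mult_left_mono order_trans)

lemma hkn: "\<bar>t\<bar> \<le> c \<Longrightarrow> 0 \<le> k \<Longrightarrow> - (k * t) \<le> k * c" for t c k :: real
  using hk[of t c "- k"] by simp

lemma norm5: "norm (- a - b - c - d - e) \<le> norm a + norm b + norm c + norm d + norm (e::'a::real_normed_vector)"
proof -
  have "norm (- a - b - c - d - e) \<le> norm (- a - b - c - d) + norm e" by (rule norm_triangle_ineq4)
  moreover have "norm (- a - b - c - d) \<le> norm (- a - b - c) + norm d" by (rule norm_triangle_ineq4)
  moreover have "norm (- a - b - c) \<le> norm (- a - b) + norm c" by (rule norm_triangle_ineq4)
  moreover have "norm (- a - b) \<le> norm (- a) + norm b" by (rule norm_triangle_ineq4)
  ultimately show ?thesis by simp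
qed

lemma j2_zero: "j2 (0::real^'a::finite) (0::real^'b::finite) = 0"
  by (auto simp: Finite_Cartesian_Product.vec_eq_iff j2_def split: sum.split)

lemma ip_abs: "norm x \<le> \<alpha> \<Longrightarrow> norm y \<le> \<beta> \<Longrightarrow> \<bar>x \<bullet> y\<bar> \<le> \<alpha> * \<beta>"
  for x y :: "'a::real_inner"
  by (meson Cauchy_Schwarz_ineq2 mult_mono norm_ge_zero order_trans)

lemma bnd_mono: "norm (N *v y) \<le> k * norm y \<Longrightarrow> k \<le> K \<Longrightarrow> norm (N *v y) \<le> K * norm (y::real^'n::finite)"
  by (meson mult_right_mono norm_ge_zero order_trans)

theorem theorem3:
  fixes A :: "real^'n^'n" and B :: "real^'p^'n" and Bw :: "real^'q^'n"
    and C1 :: "real^'n^'r1" and D1w :: "real^'q^'r1"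
    and C2 :: "real^'n^'r2" and D2w :: "real^'q^'r2"
    and f :: "real \<Rightarrow> real^'p \<Rightarrow> real"
    and h :: "real \<Rightarrow> real^'r1 \<Rightarrow> real"
    and g :: "real \<Rightarrow> real^'r2 \<Rightarrow> ereal"
    and w :: "real \<Rightarrow> real^'q"
    and \<mu> m Lf Lh :: real
    and Q :: "real^'r2^'r2"
  defines "Pi1u \<equiv> Pi_u C1 A B" and "Pi2u \<equiv> Pi_u C2 A B"
    and "Pi1w \<equiv> Pi_w C1 A Bw D1w" and "Pi2w \<equiv> Pi_w C2 A Bw D2w"
  assumes hurwitz: "hurwitz A"
    and mu_pos: "0 < \<mu>"
    \<comment> \<open>Assumption 1\<close>
    and m_pos: "0 < m"
    and f_sc: "\<forall>t\<ge>0. strongly_convex m (f t)"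
    and f_grad: "\<forall>t\<ge>0. lipschitz_gradient Lf (f t)"
    and h_cvx: "\<forall>t\<ge>0. convex_on UNIV (h t)"
    and h_grad: "\<forall>t\<ge>0. lipschitz_gradient Lh (h t)"
    and g_cvx: "\<forall>t\<ge>0. proper_fun (g t) \<and> ext_convex (g t) \<and> lsc (g t)"
    \<comment> \<open>Assumption 2\<close>
    and feas: "\<forall>t\<ge>0. feasible f h g w Pi1u Pi1w Pi2u Pi2w t"
    and opt: "\<exists>(us :: real \<Rightarrow> real^'p) (ls :: real \<Rightarrow> real^'r2).
               (\<lambda>t. (us t, ls t)) \<in> borel_measurable (restrict_space borel {0..}) \<and>
               (\<forall>t\<ge>0. \<forall>u l.
                  saddle_fun f h g w Pi1u Pi1w Pi2u Pi2w \<mu> t (us t) l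
                    \<le> saddle_fun f h g w Pi1u Pi1w Pi2u Pi2w \<mu> t (us t) (ls t) \<and>
                  saddle_fun f h g w Pi1u Pi1w Pi2u Pi2w \<mu> t (us t) (ls t)
                    \<le> saddle_fun f h g w Pi1u Pi1w Pi2u Pi2w \<mu> t u (ls t))"
    \<comment> \<open>hypotheses of the theorem\<close>
    and Q_psd: "psd Q"
    and null_cond: "{x. (Pi2u ** transpose Pi2u) *v x = 0} \<inter> {x. Q *v x = 0} = {0}"
    and mu_ge: "max (Lf - m) Lh \<le> \<mu>"
  shows "\<forall>\<gamma>>0. \<exists>\<epsilon>>0. \<exists>\<rho>>0. \<exists>\<phi>1\<ge>0. \<exists>\<phi>2\<ge>0. \<exists>P.
           pd P \<and>
           LMI (AA_rho A B m \<mu> Q \<gamma> \<epsilon> \<rho>) (BB Pi1u Pi2u \<mu> :: real^('p + 'r1 + 'r2)^('n + 'p + 'r2))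
               (CC C1 C2 \<mu>) P (Xi (Lf - m) Lh \<phi>1 \<phi>2)"

proof (intro allI impI)
  fix \<gamma> :: real assume gam: "0 < \<gamma>"
  define T where "T = matrix_inv A ** B"
  define Pi where "Pi = Pi2u"
  have AT: "A ** T = B" unfolding T_def matrix_mul_assoc hurwitz_inv[OF hurwitz] by simp
  have P1: "Pi1u = - (C1 ** T)" unfolding Pi1u_def Pi_u_def T_def matrix_mul_assoc ..
  have P2: "Pi = - (C2 ** T)" unfolding Pi_def Pi2u_def Pi_u_def T_def matrix_mul_assoc ..
  have ATu: "A *v (T *v y) = B *v y" for y using AT by (simp add: matrix_vector_mul_assoc)
  have C1T: "C1 *v (T *v y) = - (Pi1u *v y)" for y unfolding P1 by (simp add: matrix_vector_mul_assoc uminus_mat_vec)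
  have C2T: "C2 *v (T *v y) = - (Pi *v y)" for y unfolding P2 by (simp add: matrix_vector_mul_assoc uminus_mat_vec)
  have mu0: "\<mu> \<noteq> 0" using mu_pos by simp
  obtain XL \<kappa>X where symXL: "transpose XL = XL" and kX: "0 < \<kappa>X"
    and XLge: "\<And>x. (norm x)\<^sup>2 \<le> x \<bullet> (XL *v x)" and XLA: "\<And>x. x \<bullet> (XL *v (A *v x)) \<le> - \<kappa>X * (norm x)\<^sup>2"
    using lyapunov[OF hurwitz] by blast
  have Lfpos: "0 < Lf" using Lf_pos[of m "f 0" Lf] f_sc f_grad m_pos by simp
  have Lh0: "0 \<le> Lh" using lip_nonneg[of Lh "h 0"] h_grad by simp
  \<comment> \<open>operator bounds\<close>
  obtain K1 where K1: "K1 > 0" "\<And>y. norm (T *v y) \<le> K1 * norm y" using opbound by blast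
  obtain K2 where K2: "K2 > 0" "\<And>y. norm (transpose T *v y) \<le> K2 * norm y" using opbound by blast
  obtain K3 where K3: "K3 > 0" "\<And>y. norm (XL *v y) \<le> K3 * norm y" using opbound by blast
  obtain K4 where K4: "K4 > 0" "\<And>y. norm (Pi *v y) \<le> K4 * norm y" using opbound by blast
  obtain K5 where K5: "K5 > 0" "\<And>y. norm (transpose Pi *v y) \<le> K5 * norm y" using opbound by blast
  obtain K6 where K6: "K6 > 0" "\<And>y. norm (Pi1u *v y) \<le> K6 * norm y" using opbound by blast
  obtain K7 where K7: "K7 > 0" "\<And>y. norm (transpose Pi1u *v y) \<le> K7 * norm y" using opbound by blast
  obtain K8 where K8: "K8 > 0" "\<And>y. norm (C1 *v y) \<le> K8 * norm y" using opbound by blast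
  obtain K9 where K9: "K9 > 0" "\<And>y. norm (C2 *v y) \<le> K9 * norm y" using opbound by blast
  obtain K10 where K10: "K10 > 0" "\<And>y. norm (Q *v y) \<le> K10 * norm y" using opbound by blast
  define K where "K = 1 + K1 + K2 + K3 + K4 + K5 + K6 + K7 + K8 + K9 + K10"
  have Kpos: "0 < K" "1 \<le> K" unfolding K_def using K1 K2 K3 K4 K5 K6 K7 K8 K9 K10 by auto
  have bT: "norm (T *v y) \<le> K * norm y" for y
    by (rule bnd_mono[OF K1(2)]) (unfold K_def, use K2 K3 K4 K5 K6 K7 K8 K9 K10 in linarith)
  have bTt: "norm (transpose T *v y) \<le> K * norm y" for y
    by (rule bnd_mono[OF K2(2)]) (unfold K_def, use K1 K3 K4 K5 K6 K7 K8 K9 K10 in linarith)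
  have bX: "norm (XL *v y) \<le> K * norm y" for y
    by (rule bnd_mono[OF K3(2)]) (unfold K_def, use K1 K2 K4 K5 K6 K7 K8 K9 K10 in linarith)
  have bPi: "norm (Pi *v y) \<le> K * norm y" for y
    by (rule bnd_mono[OF K4(2)]) (unfold K_def, use K1 K2 K3 K5 K6 K7 K8 K9 K10 in linarith)
  have bPit: "norm (transpose Pi *v y) \<le> K * norm y" for y
    by (rule bnd_mono[OF K5(2)]) (unfold K_def, use K1 K2 K3 K4 K6 K7 K8 K9 K10 in linarith)
  have bP1: "norm (Pi1u *v y) \<le> K * norm y" for y
    by (rule bnd_mono[OF K6(2)]) (unfold K_def, use K1 K2 K3 K4 K5 K7 K8 K9 K10 in linarith)
  have bP1t: "norm (transpose Pi1u *v y) \<le> K * norm y" for y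
    by (rule bnd_mono[OF K7(2)]) (unfold K_def, use K1 K2 K3 K4 K5 K6 K8 K9 K10 in linarith)
  have bC1: "norm (C1 *v y) \<le> K * norm y" for y
    by (rule bnd_mono[OF K8(2)]) (unfold K_def, use K1 K2 K3 K4 K5 K6 K7 K9 K10 in linarith)
  have bC2: "norm (C2 *v y) \<le> K * norm y" for y
    by (rule bnd_mono[OF K9(2)]) (unfold K_def, use K1 K2 K3 K4 K5 K6 K7 K8 K10 in linarith)
  have bQ: "norm (Q *v y) \<le> K * norm y" for y
    by (rule bnd_mono[OF K10(2)]) (unfold K_def, use K1 K2 K3 K4 K5 K6 K7 K8 K9 in linarith)
  \<comment> \<open>kappa0\<close>
  obtain \<kappa>0 where k0: "0 < \<kappa>0" and k0b: "\<And>l. \<kappa>0 * (norm l)\<^sup>2 \<le> (norm (transpose Pi *v l))\<^sup>2 + l \<bullet> (Q *v l)"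
  proof -
    have nul: "l = 0" if "transpose Pi *v l = 0" "Q *v l = 0" for l
    proof -
      have "(Pi2u ** transpose Pi2u) *v l = 0" using that(1) unfolding Pi_def
        by (simp add: matrix_vector_mul_assoc[symmetric])
      hence "l \<in> {x. (Pi2u ** transpose Pi2u) *v x = 0} \<inter> {x. Q *v x = 0}" using that(2) by simp
      thus ?thesis using null_cond by simp
    qed
    show ?thesis using kappa0_exists[OF Q_psd nul] that by blast
  qed
  have Qpos: "0 \<le> y \<bullet> (Q *v y)" for y using Q_psd unfolding psd_def by auto
  \<comment> \<open>phi1\<close>
  obtain \<phi>1 \<phi>1' where p1: "0 < \<phi>1'" "\<phi>1' < \<phi>1" and p1c: "(\<phi>1 * (Lf - m) - \<mu>)\<^sup>2 < 4 * \<phi>1' * \<mu> * m"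
    using lemma_Y[OF mu_pos m_pos, of "Lf - m"] Lfpos by auto
  define c1 where "c1 = \<bar>\<phi>1 * (Lf - m) - \<mu>\<bar>"
  have c1sq: "c1\<^sup>2 < 4 * \<phi>1' * \<mu> * m" unfolding c1_def using p1c by simp
  define \<sigma>1 where "\<sigma>1 = \<mu> * m - c1\<^sup>2 / (4 * \<phi>1')"
  have s1pos: "0 < \<sigma>1"
  proof -
    have "c1\<^sup>2 < (\<mu> * m) * (4 * \<phi>1')" using c1sq by (simp add: algebra_simps)
    hence "c1\<^sup>2 / (4 * \<phi>1') < \<mu> * m" using p1 by (simp add: pos_divide_less_eq)
    thus ?thesis unfolding \<sigma>1_def by simp
  qed
  define M2 where "M2 = \<sigma>1 / (4 * \<mu> * K\<^sup>2)"
  have M2pos: "0 < M2" unfolding M2_def using s1pos mu_pos Kpos by simp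
  obtain \<phi>2 \<phi>2' where p2: "0 < \<phi>2'" "\<phi>2' < \<phi>2" and p2c: "(\<phi>2 * Lh - \<mu>)\<^sup>2 < 4 * \<phi>2' * \<mu> * M2"
    using lemma_Y[OF mu_pos M2pos, of Lh] Lh0 M2pos by auto
  define c2 where "c2 = \<bar>\<phi>2 * Lh - \<mu>\<bar>"
  have c2sq: "(c2 * K)\<^sup>2 < \<phi>2' * \<sigma>1"
  proof -
    have "(c2 * K)\<^sup>2 = (\<phi>2 * Lh - \<mu>)\<^sup>2 * K\<^sup>2" unfolding c2_def by (simp add: power_mult_distrib)
    also have "\<dots> < (4 * \<phi>2' * \<mu> * M2) * K\<^sup>2" using p2c Kpos by simp
    also have "\<dots> = \<phi>2' * \<sigma>1" unfolding M2_def using Kpos mu_pos by (simp add: field_simps)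
    finally show ?thesis .
  qed
  define \<kappa>1 where "\<kappa>1 = min (min (\<sigma>1 / 2) (\<phi>1 - \<phi>1')) (min (\<phi>2 - \<phi>2') 1)"
  have k1pos: "0 < \<kappa>1" unfolding \<kappa>1_def using s1pos p1 p2 by auto
  define D where "D = m * K + K\<^sup>2 + K\<^sup>2 / \<mu> + \<gamma> * K\<^sup>2 + K"
  have Dpos: "0 < D" unfolding D_def using m_pos Kpos mu_pos gam by (simp add: add_pos_pos)
  define Cr where "Cr = 5 * D\<^sup>2 / \<kappa>0 + D"
  have Crpos: "0 < Cr"
  proof -
    have "0 \<le> 5 * D\<^sup>2 / \<kappa>0" using k0 by simp
    thus ?thesis unfolding Cr_def using Dpos by linarith
  qed
  define \<delta> where "\<delta> = min (min (\<mu> * \<gamma>) (\<mu> / (2 * K))) (\<kappa>1 / (2 * Cr))"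
  have dpos: "0 < \<delta>" unfolding \<delta>_def using mu_pos gam Kpos k1pos Crpos by auto
  have dle: "\<delta> \<le> \<mu> * \<gamma>" "\<delta> \<le> \<mu> / (2 * K)" "\<delta> \<le> \<kappa>1 / (2 * Cr)" unfolding \<delta>_def by auto
  define \<kappa> where "\<kappa> = min (\<kappa>1 / 2) (\<delta> * \<kappa>0 / 2)"
  have kpos: "0 < \<kappa>" unfolding \<kappa>_def using k1pos dpos k0 by auto
  define Cx where "Cx = K\<^sup>2 * (m + 1 + 2 * K + K / \<mu>) + \<phi>2 * Lh * K + K * (\<mu> + 1)"
  have Cx0: "0 \<le> Cx" unfolding Cx_def using Kpos m_pos mu_pos p2 Lh0 by (simp add: add_nonneg_nonneg)
  define \<epsilon> where "\<epsilon> = \<kappa>X / (5 * Cx\<^sup>2 / (2 * \<kappa>) + 1)"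
  have epos: "0 < \<epsilon>"
  proof -
    have "0 \<le> 5 * Cx\<^sup>2 / (2 * \<kappa>)" using kpos by simp
    hence "0 < 5 * Cx\<^sup>2 / (2 * \<kappa>) + 1" by linarith
    thus ?thesis unfolding \<epsilon>_def using kX by simp
  qed
  define Cv where "Cv = K + \<mu> + \<delta> * K"
  have Cvpos: "0 < Cv" unfolding Cv_def using Kpos mu_pos dpos by (simp add: add_pos_pos)
  define \<rho> where "\<rho> = min 1 (\<kappa> / 2) / Cv"
  have rpos: "0 < \<rho>" unfolding \<rho>_def using kpos Cvpos by simp
  have rCv: "\<rho> * (K + \<mu> + \<delta> * K) \<le> min 1 (\<kappa> / 2)" unfolding \<rho>_def Cv_def[symmetric] using Cvpos by simp
  define P :: "real^('n + 'p + 'r2)^('n + 'p + 'r2)" where "P = block3 XL (XL ** T) 0 (transpose T ** XL) (transpose T ** XL ** T + \<mu> *\<^sub>R mat 1) (\<delta> *\<^sub>R transpose Pi) 0 (\<delta> *\<^sub>R Pi) (\<mu> *\<^sub>R mat 1)"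
  have symP: "transpose P = P"
    unfolding P_def transpose_block3
    by (simp add: matrix_transpose_mul symXL transpose_plus transpose_scalar transpose_zero matrix_mul_assoc)
  \<comment> \<open>the quadratic form of P\<close>
  have Vform: "j2 x (j2 u l) \<bullet> (P *v j2 x (j2 u l)) =
     (XL *v (x + T *v u)) \<bullet> (x + T *v u) + \<mu> * (u \<bullet> u) + 2 * \<delta> * ((Pi *v u) \<bullet> l) + \<mu> * (l \<bullet> l)"
    for x u l
  proof -
    have t1: "(T *v u) \<bullet> (XL *v x) = x \<bullet> (XL *v (T *v u))" by (rule sym_form[OF symXL])
    show ?thesis
      unfolding P_def block3_mult
      using t1
      by (simp add: matrix_vector_right_distrib matrix_vector_mult_scaleR matrix_vector_mult_add_rdistrib
        inner_add_left inner_add_right scaleR_matrix_vector_assoc[symmetric] matrix_vector_mul_assoc[symmetric]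
        algebra_simps inner_commute vmul_inner)
  qed
  have Vlow: "(norm (x + T *v u))\<^sup>2 + \<mu> / 2 * ((norm u)\<^sup>2 + (norm l)\<^sup>2) \<le> j2 x (j2 u l) \<bullet> (P *v j2 x (j2 u l))" for x u l
  proof -
    have a1: "(norm (x + T *v u))\<^sup>2 \<le> (XL *v (x + T *v u)) \<bullet> (x + T *v u)"
      using XLge[of "x + T *v u"] by (simp add: inner_commute)
    have "\<bar>(Pi *v u) \<bullet> l\<bar> \<le> (K * norm u) * norm l" by (rule ip_abs[OF bPi order_refl])
    hence t0: "- ((Pi *v u) \<bullet> l) \<le> K * norm u * norm l"
      using abs_ge_minus_self[of "(Pi *v u) \<bullet> l"] by linarith
    have "2 * (norm u * norm l) \<le> (norm u)\<^sup>2 + (norm l)\<^sup>2" using young[of "1/2" "norm u" "norm l"] by simp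
    from mult_left_mono[OF this, of "K / 2"] Kpos
    have t1: "K * norm u * norm l \<le> K / 2 * ((norm u)\<^sup>2 + (norm l)\<^sup>2)" by simp
    from mult_right_mono[OF dle(2), of K] Kpos
    have t2: "\<delta> * K \<le> \<mu> / 2" by simp
    have "- (2 * \<delta> * ((Pi *v u) \<bullet> l)) = 2 * \<delta> * (- ((Pi *v u) \<bullet> l))" by simp
    also have "\<dots> \<le> 2 * \<delta> * (K / 2 * ((norm u)\<^sup>2 + (norm l)\<^sup>2))"
      using t0 t1 dpos by (intro mult_left_mono) auto
    also have "\<dots> = (\<delta> * K) * ((norm u)\<^sup>2 + (norm l)\<^sup>2)" by simp
    also have "\<dots> \<le> \<mu> / 2 * ((norm u)\<^sup>2 + (norm l)\<^sup>2)"
      using t2 by (intro mult_right_mono) auto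
    finally have "- (2 * \<delta> * ((Pi *v u) \<bullet> l)) \<le> \<mu> / 2 * ((norm u)\<^sup>2 + (norm l)\<^sup>2)" .
    note q4 = this
    have q5: "\<mu> * (u \<bullet> u) + \<mu> * (l \<bullet> l) = \<mu> / 2 * ((norm u)\<^sup>2 + (norm l)\<^sup>2) + \<mu> / 2 * ((norm u)\<^sup>2 + (norm l)\<^sup>2)"
      by (simp add: dot_square_norm algebra_simps)
    show ?thesis unfolding Vform using a1 q4 q5 by linarith
  qed
  have pdP: "pd P"
    unfolding pd_def
  proof (intro conjI symP allI impI)
    fix \<xi> :: "real^('n + 'p + 'r2)" assume "\<xi> \<noteq> 0"
    obtain x u l where \<xi>: "\<xi> = j2 x (j2 u l)" using j2_split by metis
    have nz: "x + T *v u \<noteq> 0 \<or> u \<noteq> 0 \<or> l \<noteq> 0"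
    proof (rule ccontr)
      assume "\<not> ?thesis"
      hence "x + T *v u = 0" "u = 0" "l = 0" by auto
      hence "x = 0" "u = 0" "l = 0" by auto
      hence "\<xi> = 0" unfolding \<xi> by (simp add: j2_zero)
      with \<open>\<xi> \<noteq> 0\<close> show False by simp
    qed
    have "0 < (norm (x + T *v u))\<^sup>2 + \<mu> / 2 * ((norm u)\<^sup>2 + (norm l)\<^sup>2)"
    proof -
      have "0 < (norm (x + T *v u))\<^sup>2 \<or> 0 < (norm u)\<^sup>2 + (norm l)\<^sup>2"
      proof (cases "x + T *v u = 0")
        case False thus ?thesis by simp
      next
        case True
        with nz have "u \<noteq> 0 \<or> l \<noteq> 0" by simp
        thus ?thesis
        proof
          assume "u \<noteq> 0"
          hence "0 < (norm u)\<^sup>2" by simp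
          thus ?thesis by (simp add: add_pos_nonneg)
        next
          assume "l \<noteq> 0"
          hence "0 < (norm l)\<^sup>2" by simp
          thus ?thesis by (simp add: add_nonneg_pos)
        qed
      qed
      moreover have "0 \<le> (norm (x + T *v u))\<^sup>2" "0 \<le> (norm u)\<^sup>2 + (norm l)\<^sup>2" by simp_all
      ultimately show ?thesis using mu_pos by (auto intro: add_pos_nonneg add_nonneg_pos)
    qed
    with Vlow[of x u l] show "0 < \<xi> \<bullet> (P *v \<xi>)" unfolding \<xi> by linarith
  qed
  have symXi: "transpose (Xi (Lf - m) Lh \<phi>1 \<phi>2 :: real^(('p + 'r1 + 'r2) + ('p + 'r1 + 'r2))^(('p + 'r1 + 'r2) + ('p + 'r1 + 'r2))) = Xi (Lf - m) Lh \<phi>1 \<phi>2"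
    unfolding Xi_def transpose_block2 transpose_block3 by (simp add: transpose_scalar transpose_zero transpose_uminus)
  have LMIok: "LMI (AA_rho A B m \<mu> Q \<gamma> \<epsilon> \<rho>) (BB Pi1u Pi2u \<mu> :: real^('p + 'r1 + 'r2)^('n + 'p + 'r2))
               (CC C1 C2 \<mu>) P (Xi (Lf - m) Lh \<phi>1 \<phi>2)"
  proof (rule LMI_by_quad[OF symP symXi])
    fix \<xi> :: "real^('n + 'p + 'r2)" and \<zeta> :: "real^('p + 'r1 + 'r2)"
    obtain x u l where \<xi>: "\<xi> = j2 x (j2 u l)" using j2_split by metis
    obtain z1 z2 z3 where \<zeta>: "\<zeta> = j2 z1 (j2 z2 z3)" using j2_split by metis
    define Eb where "Eb = (XL *v x + XL *v (T *v u)) \<bullet> ((1/\<epsilon>) *\<^sub>R (A *v x) + (1/\<epsilon>) *\<^sub>R (B *v u) + \<rho> *\<^sub>R x)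
      + (transpose T *v (XL *v x) + transpose T *v (XL *v (T *v u)) + \<mu> *\<^sub>R u + \<delta> *\<^sub>R (transpose Pi *v l))
          \<bullet> (- (m *\<^sub>R u) + \<rho> *\<^sub>R u - z1 - transpose Pi1u *v z2 - (1/\<mu>) *\<^sub>R (transpose Pi *v z3))
      + (\<delta> *\<^sub>R (Pi *v u) + \<mu> *\<^sub>R l) \<bullet> (- (\<mu> *\<^sub>R l) - \<gamma> *\<^sub>R (Q *v l) + \<rho> *\<^sub>R l + z3)
      + \<phi>1 * (Lf - m) * (u \<bullet> z1) + \<phi>2 * Lh * ((C1 *v x) \<bullet> z2) + (C2 *v x + \<mu> *\<^sub>R l) \<bullet> z3
      - \<phi>1 * (z1 \<bullet> z1) - \<phi>2 * (z2 \<bullet> z2) - z3 \<bullet> z3"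
    have LHS: "2 * ((P *v \<xi>) \<bullet> (AA_rho A B m \<mu> Q \<gamma> \<epsilon> \<rho> *v \<xi> + (BB Pi1u Pi2u \<mu> :: real^('p + 'r1 + 'r2)^('n + 'p + 'r2)) *v \<zeta>))
      + (j2 (CC C1 C2 \<mu> *v \<xi>) \<zeta>) \<bullet> (Xi (Lf - m) Lh \<phi>1 \<phi>2 *v j2 (CC C1 C2 \<mu> *v \<xi>) \<zeta>) = 2 * Eb"
      unfolding Eb_def Pi_def \<xi> \<zeta>
      by (simp add: P_def Pi_def AA_rho_def AA_def BB_def CC_def Xi_def block3_mult block2_mult matrix_vector_mult_add_rdistrib
        inner_add_left inner_add_right scaleR_matrix_vector_assoc[symmetric] uminus_mat_vec matrix_vector_mult_diff_rdistrib
        matrix_vector_mul_assoc[symmetric] inner_diff_left inner_diff_right algebra_simps inner_commute)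
    define xt where "xt = x + T *v u"
    define e where "e = z3 - \<mu> *\<^sub>R l"
    define PTl where "PTl = transpose Pi *v l"
    define w where "w = XL *v xt"
    define vv where "vv = - (m *\<^sub>R u) - z1 - transpose Pi1u *v z2 - PTl - (1/\<mu>) *\<^sub>R (transpose Pi *v e)"
    define V0 where "V0 = w \<bullet> xt - w \<bullet> (T *v u) + (transpose T *v w) \<bullet> u + \<mu> * (u \<bullet> u) + \<delta> * (PTl \<bullet> u) + \<delta> * ((Pi *v u) \<bullet> l) + \<mu> * (l \<bullet> l)"
    define Gw where "Gw = - \<mu> * m * (u \<bullet> u) + (\<phi>1 * (Lf - m) - \<mu>) * (u \<bullet> z1) - \<phi>1 * (z1 \<bullet> z1)
      + (\<phi>2 * Lh - \<mu>) * ((Pi1u *v u) \<bullet> z2) - \<phi>2 * (z2 \<bullet> z2) - e \<bullet> e - \<mu> * \<gamma> * (l \<bullet> (Q *v l)) - \<delta> * (PTl \<bullet> PTl)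
      + \<delta> * (- m * (PTl \<bullet> u) - PTl \<bullet> z1 - PTl \<bullet> (transpose Pi1u *v z2) - (1/\<mu>) * (PTl \<bullet> (transpose Pi *v e))
             + (Pi *v u) \<bullet> e - \<gamma> * ((Pi *v u) \<bullet> (Q *v l)))"
    define Gx where "Gx = (transpose T *v w) \<bullet> vv + \<phi>2 * Lh * ((C1 *v xt) \<bullet> z2) + (C2 *v xt) \<bullet> (\<mu> *\<^sub>R l + e)"
    have EbNF: "Eb = \<rho> * V0 + (1/\<epsilon>) * (w \<bullet> (A *v xt)) + Gx + Gw"
      unfolding Eb_def V0_def Gx_def Gw_def vv_def w_def PTl_def xt_def e_def
      using mu0
      by (simp add: ATu C1T C2T matrix_vector_right_distrib matrix_vector_mult_diff_distrib matrix_vector_mult_scaleR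
        inner_add_left inner_add_right inner_diff_left inner_diff_right uminus_mat_vec algebra_simps inner_commute vmul_inner mv_neg)
    define a where "a = norm xt"
    define b where "b = norm u"
    define lm where "lm = norm l"
    define s1 where "s1 = norm z1"
    define s2 where "s2 = norm z2"
    define se where "se = norm e"
    have nn: "0 \<le> a" "0 \<le> b" "0 \<le> lm" "0 \<le> s1" "0 \<le> s2" "0 \<le> se"
      unfolding a_def b_def lm_def s1_def s2_def se_def by auto
    have iPul: "\<bar>(Pi *v u) \<bullet> l\<bar> \<le> K * b * lm" unfolding b_def lm_def by (rule ip_abs[OF bPi order_refl])
    have V0b: "V0 \<le> K * a\<^sup>2 + \<mu> * b\<^sup>2 + \<mu> * lm\<^sup>2 + 2 * \<delta> * K * b * lm"
    proof -
      have c1: "(transpose T *v w) \<bullet> u = w \<bullet> (T *v u)" using tr_inner[of u T w] by (simp add: inner_commute)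
      have c2: "PTl \<bullet> u = (Pi *v u) \<bullet> l" unfolding PTl_def using tr_inner[of u Pi l] by (simp add: inner_commute)
      have e0: "V0 = w \<bullet> xt + \<mu> * b\<^sup>2 + 2 * \<delta> * ((Pi *v u) \<bullet> l) + \<mu> * lm\<^sup>2"
        unfolding V0_def b_def lm_def c1 c2 by (simp add: dot_square_norm algebra_simps)
      have "\<bar>w \<bullet> xt\<bar> \<le> K * a * a" unfolding w_def a_def by (rule ip_abs[OF bX order_refl])
      hence f1: "w \<bullet> xt \<le> K * a\<^sup>2" by (simp add: power2_eq_square abs_le_iff mult.assoc)
      have f2: "2 * \<delta> * ((Pi *v u) \<bullet> l) \<le> 2 * \<delta> * K * b * lm"
        using hk[OF iPul, of "2 * \<delta>"] dpos by (simp add: mult.assoc)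
      show ?thesis unfolding e0 using f1 f2 by linarith
    qed
    have Wab: "w \<bullet> (A *v xt) \<le> - \<kappa>X * a\<^sup>2"
      unfolding w_def a_def using XLA[of xt] sym_inner[OF symXL, of xt "A *v xt"] by simp
    have Gxb: "Gx \<le> Cx * a * (b + lm + s1 + s2 + se)"
    proof -
      define S where "S = b + lm + s1 + s2 + se"
      have Sge: "b \<le> S" "lm \<le> S" "s1 \<le> S" "s2 \<le> S" "se \<le> S" unfolding S_def using nn by auto
      have nvv: "norm vv \<le> m * b + s1 + K * s2 + K * lm + K / \<mu> * se"
      proof -
        have "norm vv \<le> norm (m *\<^sub>R u) + norm z1 + norm (transpose Pi1u *v z2) + norm PTl + norm ((1/\<mu>) *\<^sub>R (transpose Pi *v e))"
          unfolding vv_def by (rule norm5)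
        moreover have "norm (m *\<^sub>R u) = m * b" unfolding b_def using m_pos by simp
        moreover have "norm (transpose Pi1u *v z2) \<le> K * s2" unfolding s2_def by (rule bP1t)
        moreover have "norm PTl \<le> K * lm" unfolding PTl_def lm_def by (rule bPit)
        moreover have "norm ((1/\<mu>) *\<^sub>R (transpose Pi *v e)) \<le> K / \<mu> * se"
        proof -
          have "norm ((1/\<mu>) *\<^sub>R (transpose Pi *v e)) = (1/\<mu>) * norm (transpose Pi *v e)" using mu_pos by simp
          also have "\<dots> \<le> (1/\<mu>) * (K * se)" unfolding se_def using bPit mu_pos by (intro mult_left_mono) auto
          finally show ?thesis by simp
        qed
        ultimately show ?thesis unfolding s1_def by linarith
      qed
      have "m * b \<le> m * S" using Sge m_pos by (intro mult_left_mono) auto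
      moreover have "K * s2 \<le> K * S" using Sge Kpos by (intro mult_left_mono) auto
      moreover have "K * lm \<le> K * S" using Sge Kpos by (intro mult_left_mono) auto
      moreover have "K / \<mu> * se \<le> K / \<mu> * S" using Sge Kpos mu_pos by (intro mult_left_mono) auto
      moreover have "(m + 1 + 2 * K + K / \<mu>) * S = m * S + S + K * S + K * S + K / \<mu> * S" by (simp add: algebra_simps)
      ultimately have nvv2: "norm vv \<le> (m + 1 + 2 * K + K / \<mu>) * S" using nvv Sge by linarith
      have nw: "norm (transpose T *v w) \<le> K * (K * a)"
      proof -
        have "norm (transpose T *v w) \<le> K * norm w" by (rule bTt)
        also have "\<dots> \<le> K * (K * a)" unfolding w_def a_def using bX Kpos by (intro mult_left_mono) auto
        finally show ?thesis .
      qed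
      have x1: "(transpose T *v w) \<bullet> vv \<le> K\<^sup>2 * (m + 1 + 2 * K + K / \<mu>) * a * S"
      proof -
        have "\<bar>(transpose T *v w) \<bullet> vv\<bar> \<le> (K * (K * a)) * ((m + 1 + 2 * K + K / \<mu>) * S)"
          by (rule ip_abs[OF nw nvv2])
        thus ?thesis by (simp add: power2_eq_square abs_le_iff mult_ac)
      qed
      have x2: "\<phi>2 * Lh * ((C1 *v xt) \<bullet> z2) \<le> \<phi>2 * Lh * K * a * S"
      proof -
        have "\<bar>(C1 *v xt) \<bullet> z2\<bar> \<le> (K * a) * S" unfolding a_def
          by (rule ip_abs[OF bC1]) (use Sge in \<open>simp add: s2_def\<close>)
        from hk[OF this, of "\<phi>2 * Lh"] p2 Lh0 show ?thesis by (simp add: abs_mult mult_ac)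
      qed
      have x3: "(C2 *v xt) \<bullet> (\<mu> *\<^sub>R l + e) \<le> K * (\<mu> + 1) * a * S"
      proof -
        have nl: "norm (\<mu> *\<^sub>R l + e) \<le> (\<mu> + 1) * S"
        proof -
          have "norm (\<mu> *\<^sub>R l + e) \<le> \<mu> * lm + se" unfolding lm_def se_def
            using norm_triangle_ineq[of "\<mu> *\<^sub>R l" e] mu_pos by simp
          moreover have "\<mu> * lm \<le> \<mu> * S" using Sge mu_pos by (intro mult_left_mono) auto
          moreover have "(\<mu> + 1) * S = \<mu> * S + S" by (simp add: algebra_simps)
          ultimately show ?thesis using Sge by linarith
        qed
        have "\<bar>(C2 *v xt) \<bullet> (\<mu> *\<^sub>R l + e)\<bar> \<le> (K * a) * ((\<mu> + 1) * S)" unfolding a_def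
          by (rule ip_abs[OF bC2 nl])
        thus ?thesis by (simp add: abs_le_iff mult_ac)
      qed
      have "Cx * a * S = K\<^sup>2 * (m + 1 + 2 * K + K / \<mu>) * a * S + \<phi>2 * Lh * K * a * S + K * (\<mu> + 1) * a * S"
        unfolding Cx_def by (simp add: algebra_simps)
      thus ?thesis unfolding Gx_def S_def[symmetric] using x1 x2 x3 by linarith
    qed
    have Gwb: "Gw \<le> - \<mu> * m * b\<^sup>2 + c1 * b * s1 - \<phi>1 * s1\<^sup>2 + c2 * K * b * s2 - \<phi>2 * s2\<^sup>2 - se\<^sup>2 - \<delta> * \<kappa>0 * lm\<^sup>2
                 + \<delta> * D * (2 * lm * b + lm * s1 + lm * s2 + lm * se + b * se)"
    proof -
      have uu: "u \<bullet> u = b\<^sup>2" "z1 \<bullet> z1 = s1\<^sup>2" "z2 \<bullet> z2 = s2\<^sup>2" "e \<bullet> e = se\<^sup>2" "PTl \<bullet> PTl = (norm PTl)\<^sup>2"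
        unfolding b_def s1_def s2_def se_def by (simp_all add: dot_square_norm)
      have g1: "(\<phi>1 * (Lf - m) - \<mu>) * (u \<bullet> z1) \<le> c1 * b * s1"
      proof -
        have "\<bar>u \<bullet> z1\<bar> \<le> b * s1" unfolding b_def s1_def by (rule ip_abs) auto
        from hk[OF this, of "\<phi>1 * (Lf - m) - \<mu>"] show ?thesis unfolding c1_def by (simp add: mult.assoc)
      qed
      have g2: "(\<phi>2 * Lh - \<mu>) * ((Pi1u *v u) \<bullet> z2) \<le> c2 * K * b * s2"
      proof -
        have "\<bar>(Pi1u *v u) \<bullet> z2\<bar> \<le> K * b * s2" unfolding b_def s2_def by (rule ip_abs[OF bP1 order_refl])
        from hk[OF this, of "\<phi>2 * Lh - \<mu>"] show ?thesis unfolding c2_def by (simp add: mult.assoc)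
      qed
      have g3: "- \<mu> * \<gamma> * (l \<bullet> (Q *v l)) - \<delta> * (PTl \<bullet> PTl) \<le> - \<delta> * \<kappa>0 * lm\<^sup>2"
      proof -
        have q0: "0 \<le> l \<bullet> (Q *v l)" by (rule Qpos)
        have "\<delta> * (\<kappa>0 * lm\<^sup>2) \<le> \<delta> * ((norm PTl)\<^sup>2 + l \<bullet> (Q *v l))"
          using k0b[of l] dpos unfolding PTl_def lm_def by (intro mult_left_mono) auto
        moreover have "\<delta> * (l \<bullet> (Q *v l)) \<le> (\<mu> * \<gamma>) * (l \<bullet> (Q *v l))"
          using dle(1) q0 by (intro mult_right_mono) auto
        ultimately show ?thesis unfolding uu by (simp add: algebra_simps)
      qed
      define pb where "pb = lm * b"
      have pbn: "0 \<le> pb" "0 \<le> lm * s1" "0 \<le> lm * s2" "0 \<le> lm * se" "0 \<le> b * se" unfolding pb_def using nn by auto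
      have h1: "- m * (PTl \<bullet> u) \<le> (m * K) * pb"
      proof -
        have "\<bar>PTl \<bullet> u\<bar> \<le> K * lm * b" unfolding PTl_def lm_def b_def by (rule ip_abs[OF bPit order_refl])
        from hkn[OF this, of m] m_pos show ?thesis unfolding pb_def by (simp add: mult_ac)
      qed
      have h2: "- (PTl \<bullet> z1) \<le> K * (lm * s1)"
      proof -
        have "\<bar>PTl \<bullet> z1\<bar> \<le> K * lm * s1" unfolding PTl_def lm_def s1_def by (rule ip_abs[OF bPit order_refl])
        thus ?thesis by (simp add: abs_le_iff mult_ac)
      qed
      have h3: "- (PTl \<bullet> (transpose Pi1u *v z2)) \<le> K\<^sup>2 * (lm * s2)"
      proof -
        have "\<bar>PTl \<bullet> (transpose Pi1u *v z2)\<bar> \<le> (K * lm) * (K * s2)" unfolding PTl_def lm_def s2_def by (rule ip_abs[OF bPit bP1t])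
        thus ?thesis by (simp add: abs_le_iff mult_ac power2_eq_square)
      qed
      have h4: "- ((1/\<mu>) * (PTl \<bullet> (transpose Pi *v e))) \<le> (K\<^sup>2 / \<mu>) * (lm * se)"
      proof -
        have "\<bar>PTl \<bullet> (transpose Pi *v e)\<bar> \<le> (K * lm) * (K * se)" unfolding PTl_def lm_def se_def by (rule ip_abs[OF bPit bPit])
        from hkn[OF this, of "1/\<mu>"] mu_pos show ?thesis by (simp add: mult_ac power2_eq_square)
      qed
      have h5: "(Pi *v u) \<bullet> e \<le> K * (b * se)"
      proof -
        have "\<bar>(Pi *v u) \<bullet> e\<bar> \<le> K * b * se" unfolding b_def se_def by (rule ip_abs[OF bPi order_refl])
        thus ?thesis by (simp add: abs_le_iff mult_ac)
      qed
      have h6: "- (\<gamma> * ((Pi *v u) \<bullet> (Q *v l))) \<le> (\<gamma> * K\<^sup>2) * pb"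
      proof -
        have "\<bar>(Pi *v u) \<bullet> (Q *v l)\<bar> \<le> (K * b) * (K * lm)" unfolding b_def lm_def by (rule ip_abs[OF bPi bQ])
        from hkn[OF this, of \<gamma>] gam show ?thesis unfolding pb_def by (simp add: mult_ac power2_eq_square)
      qed
      have DK: "m * K \<le> D" "\<gamma> * K\<^sup>2 \<le> D" "K \<le> D" "K\<^sup>2 \<le> D" "K\<^sup>2 / \<mu> \<le> D"
      proof -
        have z: "0 \<le> m * K" "0 \<le> K\<^sup>2" "0 \<le> K\<^sup>2 / \<mu>" "0 \<le> \<gamma> * K\<^sup>2" "0 \<le> K" using m_pos Kpos mu_pos gam by auto
        show "m * K \<le> D" "\<gamma> * K\<^sup>2 \<le> D" "K \<le> D" "K\<^sup>2 \<le> D" "K\<^sup>2 / \<mu> \<le> D"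
          unfolding D_def using z by linarith+
      qed
      have m1: "(m * K) * pb \<le> D * pb" using DK pbn by (intro mult_right_mono) auto
      have m2: "(\<gamma> * K\<^sup>2) * pb \<le> D * pb" using DK pbn by (intro mult_right_mono) auto
      have m3: "K * (lm * s1) \<le> D * (lm * s1)" using DK pbn by (intro mult_right_mono) auto
      have m4: "K\<^sup>2 * (lm * s2) \<le> D * (lm * s2)" using DK pbn by (intro mult_right_mono) auto
      have m5: "(K\<^sup>2 / \<mu>) * (lm * se) \<le> D * (lm * se)" using DK pbn by (intro mult_right_mono) auto
      have m6: "K * (b * se) \<le> D * (b * se)" using DK pbn by (intro mult_right_mono) auto
      have "- m * (PTl \<bullet> u) - PTl \<bullet> z1 - PTl \<bullet> (transpose Pi1u *v z2) - (1/\<mu>) * (PTl \<bullet> (transpose Pi *v e))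
             + (Pi *v u) \<bullet> e - \<gamma> * ((Pi *v u) \<bullet> (Q *v l)) \<le> D * pb + D * pb + D * (lm * s1) + D * (lm * s2) + D * (lm * se) + D * (b * se)"
        using h1 h2 h3 h4 h5 h6 m1 m2 m3 m4 m5 m6 by linarith
      also have "\<dots> = D * (2 * lm * b + lm * s1 + lm * s2 + lm * se + b * se)" unfolding pb_def by (simp add: algebra_simps)
      finally have g4: "\<delta> * (- m * (PTl \<bullet> u) - PTl \<bullet> z1 - PTl \<bullet> (transpose Pi1u *v z2) - (1/\<mu>) * (PTl \<bullet> (transpose Pi *v e))
             + (Pi *v u) \<bullet> e - \<gamma> * ((Pi *v u) \<bullet> (Q *v l))) \<le> \<delta> * D * (2 * lm * b + lm * s1 + lm * s2 + lm * se + b * se)"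
        using dpos by (simp add: mult.assoc mult_left_mono)
      have g0: "- \<mu> * m * (u \<bullet> u) = - \<mu> * m * b\<^sup>2" "- \<phi>1 * (z1 \<bullet> z1) = - \<phi>1 * s1\<^sup>2" "- \<phi>2 * (z2 \<bullet> z2) = - \<phi>2 * s2\<^sup>2"
        unfolding uu by simp_all
      show ?thesis unfolding Gw_def using g0 g1 g2 g3 g4 uu(4) by linarith
    qed
    have "\<rho> * V0 + (1/\<epsilon>) * (w \<bullet> (A *v xt)) + Gx + Gw \<le> 0"
      by (rule final_scalar[OF nn V0b Wab Gxb Gwb mu_pos Kpos(1) kX k0 Dpos Cx0 _ _ p1 \<sigma>1_def s1pos p2 c2sq \<kappa>1_def Cr_def dpos dle(3) \<kappa>_def \<epsilon>_def less_imp_le[OF rpos] rCv])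
        (auto simp: c1_def c2_def)
    thus "2 * ((P *v \<xi>) \<bullet> (AA_rho A B m \<mu> Q \<gamma> \<epsilon> \<rho> *v \<xi> + (BB Pi1u Pi2u \<mu> :: real^('p + 'r1 + 'r2)^('n + 'p + 'r2)) *v \<zeta>))
      + (j2 (CC C1 C2 \<mu> *v \<xi>) \<zeta>) \<bullet> (Xi (Lf - m) Lh \<phi>1 \<phi>2 *v j2 (CC C1 C2 \<mu> *v \<xi>) \<zeta>) \<le> 0"
      unfolding LHS EbNF by simp
  qed
  show "\<exists>\<epsilon>>0. \<exists>\<rho>>0. \<exists>\<phi>1\<ge>0. \<exists>\<phi>2\<ge>0. \<exists>P.
           pd P \<and>
           LMI (AA_rho A B m \<mu> Q \<gamma> \<epsilon> \<rho>) (BB Pi1u Pi2u \<mu> :: real^('p + 'r1 + 'r2)^('n + 'p + 'r2))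
               (CC C1 C2 \<mu>) P (Xi (Lf - m) Lh \<phi>1 \<phi>2)"
  proof -
    have "0 \<le> \<phi>1" "0 \<le> \<phi>2" using p1 p2 by auto
    thus ?thesis using epos rpos pdP LMIok by blast
  qed
qed


end
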